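(* Let $x,y\in\mathbb{Q}$. The linear map $K_{x,y}:\mathbf{H}_{\mathrm{Pack}_1}\to\mathbf{H}_\mathrm{Pack}$ defined by $K_{x,y}(1)=1$ and \[K_{x,y}((a_1\ \cdots\ a_n))=\sum_{\substack{M_1,\dots,M_n\in \mathrm{Pack}\\ \omega(M_i)=a_i}}\left(\prod_{i=1}^n H_{\mathrm{row}(M_i)}(x)\,H_{\mathrm{col}(M_i)}(y) \right) M_1\searrow \cdots \searrow M_n\] is a bialgebra morphism from $(\mathbf{H}_{\mathrm{Pack}_1},\rightarrow,\blacktriangle)$ to $(\mathbf{H}_\mathrm{Pack},\searrow,\blacktriangle)$.
   Context: A packed matrix is a matrix with entries in $\mathbb{N}$ with no zero row and no zero column (the empty matrix $1$, with $0$ rows and columns, is packed); $\mathrm{Pack}$ is their set and $\mathbf{H}_\mathrm{Pack}$ the $\mathbb{Q}$-vector space with basis $\mathrm{Pack}$. $\mathrm{row}(M)$, $\mathrm{col}(M)$ are the numbers of rows and columns, $\omega(M)$ the sum of entries. $\mathcal{M}_{k,l}(\mathbb{N})$ denotes $k\times l$ matrices over $\mathbb{N}$; $p(M)$ is obtained from $M$ by deleting zero rows and columns. On $\mathbf{H}_\mathrm{Pack}$: $M\searrow M'=\begin{pmatrix}M&0\\0&M'\end{pmatrix}$ and, for $M$ with $k$ rows and $l$ columns, $\blacktriangle(M)=\sum_{M',M''\in\mathcal{M}_{k,l}(\mathbb{N}),\ M'+M''=M}p(M')\otimes p(M'')$, $\blacktriangle(1)=1\otimes1$. $\mathbf{H}_{\mathrm{Pack}_1}$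 is the $\mathbb{Q}$-vector space with basis the packed row matrices $(a_1\ \cdots\ a_n)$, $a_i\geq1$, and $1$, with product concatenation $\rightarrow$ and coproduct $\blacktriangle(M)=\sum_{M',M''\in\mathcal{M}_{1,n}(\mathbb{N}),\ M'+M''=M}p(M')\otimes p(M'')$. $H_n(X)=X(X-1)\cdots(X-n+1)/n!$ is the $n$-th Hilbert polynomial ($H_0=1$). *)

theory Defs
  imports Complex_Main
begin

text \<open>Matrices over nat are represented as lists of rows. The empty list is the
empty matrix 1. Row matrices (a_1 ... a_n) are represented as [[a_1,...,a_n]].\<close>

type_synonym mat = "nat list list"

definition nrows :: "mat \<Rightarrow> nat" where
  "nrows M = length M"

definition ncols :: "mat \<Rightarrow> nat" where
  "ncols M = (if M = [] then 0 else length (hd M))"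

definition packed :: "mat \<Rightarrow> bool" where
  "packed M \<longleftrightarrow> (\<forall>r\<in>set M. length r = ncols M)
     \<and> (\<forall>r\<in>set M. \<exists>a\<in>set r. a \<noteq> 0)
     \<and> (\<forall>j<ncols M. \<exists>r\<in>set M. r ! j \<noteq> 0)"

definition weight :: "mat \<Rightarrow> nat" where
  "weight M = (\<Sum>r\<leftarrow>M. sum_list r)"

definition pk :: "mat \<Rightarrow> mat" where
  "pk M = map (\<lambda>r. map (\<lambda>j. r ! j) (filter (\<lambda>j. \<exists>r'\<in>set M. r' ! j \<noteq> 0) [0..<ncols M]))
              (filter (\<lambda>r. \<exists>a\<in>set r. a \<noteq> 0) M)"

definition diag :: "mat \<Rightarrow> mat \<Rightarrow> mat" where
  "diag M N = map (\<lambda>r. r @ replicate (ncols N) 0) M @ map (\<lambda>r. replicate (ncols M) 0 @ r) N"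

text \<open>Concatenation of packed row matrices (product of H_Pack1).\<close>
definition rconcat :: "mat \<Rightarrow> mat \<Rightarrow> mat" where
  "rconcat M N = (if M = [] then N else if N = [] then M else [hd M @ hd N])"

definition decomp :: "mat \<Rightarrow> (mat \<times> mat) set" where
  "decomp M = {(A, B). length A = nrows M \<and> length B = nrows M
      \<and> (\<forall>r\<in>set A. length r = ncols M) \<and> (\<forall>r\<in>set B. length r = ncols M)
      \<and> (\<forall>i<nrows M. \<forall>j<ncols M. A ! i ! j + B ! i ! j = M ! i ! j)}"

text \<open>Coefficient of p(M') \<otimes> p(M'') in the coproduct of the basis element M.\<close>
definition cop_basis :: "mat \<Rightarrow> mat \<times> mat \<Rightarrow> rat" where
  "cop_basis M PQ = of_nat (card {(A, B) \<in> decomp M. (pk A, pk B) = PQ})"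

definition packed_row :: "mat \<Rightarrow> bool" where
  "packed_row M \<longleftrightarrow> M = [] \<or> (\<exists>r. M = [r] \<and> r \<noteq> [] \<and> (\<forall>a\<in>set r. 1 \<le> a))"

definition hilb :: "nat \<Rightarrow> rat \<Rightarrow> rat" where
  "hilb n X = (\<Prod>i<n. X - of_nat i) / fact n"

text \<open>Vector spaces: finitely supported rational-valued functions on the basis.\<close>
definition supp :: "('a \<Rightarrow> rat) \<Rightarrow> 'a set" where
  "supp f = {x. f x \<noteq> 0}"

definition H_Pack :: "(mat \<Rightarrow> rat) set" where
  "H_Pack = {f. finite (supp f) \<and> (\<forall>M\<in>supp f. packed M)}"

definition H_Pack1 :: "(mat \<Rightarrow> rat) set" where
  "H_Pack1 = {f. finite (supp f) \<and> (\<forall>M\<in>supp f. packed_row M)}"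

definition unit_el :: "mat \<Rightarrow> rat" where
  "unit_el N = (if N = [] then 1 else 0)"

definition lin :: "('a \<Rightarrow> 'b \<Rightarrow> rat) \<Rightarrow> ('a \<Rightarrow> rat) \<Rightarrow> 'b \<Rightarrow> rat" where
  "lin g f = (\<lambda>N. \<Sum>M\<in>supp f. f M * g M N)"

definition bilin :: "(mat \<Rightarrow> mat \<Rightarrow> mat) \<Rightarrow> (mat \<Rightarrow> rat) \<Rightarrow> (mat \<Rightarrow> rat) \<Rightarrow> mat \<Rightarrow> rat" where
  "bilin m f g = (\<lambda>N. \<Sum>M1\<in>supp f. \<Sum>M2\<in>supp g. if m M1 M2 = N then f M1 * g M2 else 0)"

definition coprod :: "(mat \<Rightarrow> rat) \<Rightarrow> (mat \<times> mat \<Rightarrow> rat)" where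
  "coprod = lin cop_basis"

definition counit :: "(mat \<Rightarrow> rat) \<Rightarrow> rat" where
  "counit f = f []"

definition tensor_map :: "(mat \<Rightarrow> mat \<Rightarrow> rat) \<Rightarrow> (mat \<times> mat \<Rightarrow> rat) \<Rightarrow> mat \<times> mat \<Rightarrow> rat" where
  "tensor_map g = lin (\<lambda>(M1, M2) (P, Q). g M1 P * g M2 Q)"

definition K_row :: "rat \<Rightarrow> rat \<Rightarrow> nat list \<Rightarrow> mat \<Rightarrow> rat" where
  "K_row x y as N = (\<Sum>Ms\<in>{Ms. length Ms = length as \<and>
        (\<forall>i<length as. packed (Ms ! i) \<and> weight (Ms ! i) = as ! i)}.
      if foldr diag Ms [] = N
      then (\<Prod>i<length as. hilb (nrows (Ms ! i)) x * hilb (ncols (Ms ! i)) y) else 0)"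

definition K_basis :: "rat \<Rightarrow> rat \<Rightarrow> mat \<Rightarrow> mat \<Rightarrow> rat" where
  "K_basis x y R = (if R = [] then unit_el else K_row x y (hd R))"

definition K :: "rat \<Rightarrow> rat \<Rightarrow> (mat \<Rightarrow> rat) \<Rightarrow> (mat \<Rightarrow> rat)" where
  "K x y = lin (K_basis x y)"

end

theory Submission
  imports Defs "HOL-Computational_Algebra.Formal_Power_Series"
begin

definition rect :: "mat \<Rightarrow> bool" where
  "rect M \<longleftrightarrow> (\<forall>r\<in>set M. length r = ncols M)"

definition fd :: "mat list \<Rightarrow> mat" where
  "fd Ms = foldr diag Ms []"

definition Pk :: "nat \<Rightarrow> mat set" where
  "Pk a = {M. packed M \<and> weight M = a}"

lemma fd_Nil[simp]: "fd [] = []" and fd_Cons[simp]: "fd (M#Ms) = diag M (fd Ms)"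
  by (simp_all add: fd_def)

lemma ncols_Nil[simp]: "ncols [] = 0" by (simp add: ncols_def)
lemma nrows_Nil[simp]: "nrows [] = 0" by (simp add: nrows_def)

lemma diag_Nil1[simp]: "diag [] N = N"
  by (simp add: diag_def)

lemma diag_Nil2[simp]: "diag M [] = M"
  by (simp add: diag_def)

lemma ncols_diag: "ncols (diag M N) = ncols M + ncols N"
  by (cases M; cases N) (auto simp: diag_def ncols_def)

lemma nrows_diag: "nrows (diag M N) = nrows M + nrows N"
  by (simp add: diag_def nrows_def)

lemma length_diag[simp]: "length (diag M N) = length M + length N"
  by (simp add: diag_def)

lemma diag_assoc: "diag (diag A B) C = diag A (diag B C)"
  unfolding diag_def[of "diag A B" C] diag_def[of A "diag B C"] ncols_diag
  unfolding diag_def by (simp add: replicate_add)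

lemma weight_diag: "weight (diag M N) = weight M + weight N"
  by (simp add: diag_def weight_def comp_def sum_list_replicate)

lemma weight_Nil[simp]: "weight [] = 0" by (simp add: weight_def)

lemma packed_Nil[simp]: "packed []"
  by (simp add: packed_def)

lemma packed_rect: "packed M \<Longrightarrow> rect M"
  by (simp add: packed_def rect_def)

lemma packed_diag:
  assumes "packed M" "packed N" shows "packed (diag M N)"
proof -
  have rM: "\<forall>r\<in>set M. length r = ncols M" and rN: "\<forall>r\<in>set N. length r = ncols N"
    using assms by (auto simp: packed_def)
  have 1: "\<forall>r\<in>set (diag M N). length r = ncols (diag M N)"
    unfolding ncols_diag using rM rN by (auto simp: diag_def)
  have 2: "\<forall>r\<in>set (diag M N). \<exists>a\<in>set r. a \<noteq> 0"
    using assms by (auto simp: diag_def packed_def; blast)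
  have 3: "\<exists>r\<in>set (diag M N). r ! j \<noteq> 0" if "j < ncols (diag M N)" for j
  proof (cases "j < ncols M")
    case True
    then obtain r where "r \<in> set M" "r ! j \<noteq> 0" using assms(1) by (auto simp: packed_def)
    then show ?thesis using rM True
      by (auto simp: diag_def nth_append intro!: bexI[of _ "r @ replicate (ncols N) 0"])
  next
    case False
    then have "j - ncols M < ncols N" using that by (simp add: ncols_diag)
    then obtain r where "r \<in> set N" "r ! (j - ncols M) \<noteq> 0" using assms(2) by (auto simp: packed_def)
    then show ?thesis using False
      by (auto simp: diag_def nth_append intro!: bexI[of _ "replicate (ncols M) 0 @ r"])
  qed
  show ?thesis using 1 2 3 by (simp add: packed_def)
qed

lemma packed_fd: "\<forall>M\<in>set Ms. packed M \<Longrightarrow> packed (fd Ms)"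
  by (induction Ms) (auto intro: packed_diag)

lemma weight_fd: "weight (fd Ms) = (\<Sum>M\<leftarrow>Ms. weight M)"
  by (induction Ms) (auto simp: weight_diag)

lemma fd_append: "fd (Ms1 @ Ms2) = diag (fd Ms1) (fd Ms2)"
  by (induction Ms1) (auto simp: diag_assoc)

lemma sum_list_ge_len: "(\<forall>r\<in>set M. (1::nat) \<le> f r) \<Longrightarrow> length M \<le> (\<Sum>r\<leftarrow>M. f r)"
  by (induction M) auto

lemma row_pos: "\<exists>a\<in>set r. a \<noteq> 0 \<Longrightarrow> 1 \<le> sum_list (r::nat list)"
  using member_le_sum_list by fastforce

lemma weight_cols: "\<forall>r\<in>set M. length r = l \<Longrightarrow> weight M = (\<Sum>j<l. \<Sum>r\<leftarrow>M. r!j)"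
proof (induction M)
  case Nil then show ?case by (simp add: weight_def)
next
  case (Cons r M)
  have "sum_list r = (\<Sum>j<l. r!j)" using Cons.prems
    by (simp add: sum_list_sum_nth atLeast0LessThan)
  then show ?case using Cons by (simp add: weight_def sum.distrib)
qed

lemma packed_bounds:
  assumes "packed M"
  shows "nrows M \<le> weight M" "ncols M \<le> weight M" "\<forall>r\<in>set M. \<forall>a\<in>set r. a \<le> weight M"
proof -
  show "nrows M \<le> weight M" unfolding nrows_def weight_def
    using assms by (intro sum_list_ge_len) (auto simp: packed_def intro!: row_pos[simplified])
  have w: "weight M = (\<Sum>j<ncols M. \<Sum>r\<leftarrow>M. r!j)"
    using assms by (intro weight_cols) (auto simp: packed_def)
  have "(\<Sum>j<ncols M. (1::nat)) \<le> (\<Sum>j<ncols M. \<Sum>r\<leftarrow>M. r!j)"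
  proof (rule sum_mono)
    fix j assume "j \<in> {..<ncols M}"
    then obtain r where r: "r \<in> set M" "r!j \<noteq> 0" using assms by (auto simp: packed_def)
    then have "r!j \<le> (\<Sum>r\<leftarrow>M. r!j)" by (intro member_le_sum_list) auto
    then show "1 \<le> (\<Sum>r\<leftarrow>M. r!j)" using r by linarith
  qed
  then show "ncols M \<le> weight M" using w by simp
  show "\<forall>r\<in>set M. \<forall>a\<in>set r. a \<le> weight M"
  proof (intro ballI)
    fix r a assume "r \<in> set M" "a \<in> set r"
    then have "a \<le> sum_list r" "sum_list r \<le> weight M"
      by (auto simp: weight_def intro!: member_le_sum_list)
    then show "a \<le> weight M" by linarith
  qed
qed

definition Bnd :: "nat \<Rightarrow> mat set" where
  "Bnd W = {M. length M \<le> W \<and> (\<forall>r\<in>set M. length r \<le> W \<and> (\<forall>a\<in>set r. a \<le> W))}"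

lemma finite_Bnd: "finite (Bnd W)"
proof -
  have f: "finite {r. set r \<subseteq> {..W} \<and> length r \<le> W}"
    by (rule finite_lists_length_le) simp
  have "Bnd W \<subseteq> {M. set M \<subseteq> {r. set r \<subseteq> {..W} \<and> length r \<le> W} \<and> length M \<le> W}"
    by (auto simp: Bnd_def)
  then show ?thesis using finite_lists_length_le[OF f] finite_subset by blast
qed

lemma finite_packed_le: "finite {M. packed M \<and> weight M \<le> W}"
proof -
  have "{M. packed M \<and> weight M \<le> W} \<subseteq> Bnd W"
  proof
    fix M assume "M \<in> {M. packed M \<and> weight M \<le> W}"
    then have p: "packed M" and w: "weight M \<le> W" by auto
    note b = packed_bounds[OF p]
    have "\<forall>r\<in>set M. length r = ncols M" using p by (simp add: packed_def)
    then show "M \<in> Bnd W" using b w by (fastforce simp: Bnd_def nrows_def)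
  qed
  then show ?thesis using finite_Bnd finite_subset by blast
qed

lemma finite_Pk: "finite (Pk a)"
  by (rule finite_subset[OF _ finite_packed_le[of a]]) (auto simp: Pk_def)

lemma finite_decomp: "finite (decomp M)"
proof -
  define E where "E = (\<Sum>p\<in>{..<nrows M}\<times>{..<ncols M}. M!fst p!snd p)"
  define R where "R = {r. set r \<subseteq> {..E} \<and> length r = ncols M}"
  have fR: "finite R" unfolding R_def by (rule finite_lists_length_eq) simp
  have fL: "finite {xs. set xs \<subseteq> R \<and> length xs = nrows M}" by (rule finite_lists_length_eq[OF fR])
  have sub: "A \<in> {xs. set xs \<subseteq> R \<and> length xs = nrows M}"
    if A: "length A = nrows M" "\<forall>r\<in>set A. length r = ncols M"
       "\<forall>i<nrows M. \<forall>j<ncols M. A ! i ! j \<le> M ! i ! j" for A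
  proof -
    have "r \<in> R" if "r \<in> set A" for r
    proof -
      obtain i where i: "i < length A" "r = A!i" using \<open>r \<in> set A\<close> by (auto simp: in_set_conv_nth)
      have "a \<le> E" if "a \<in> set r" for a
      proof -
        obtain j where j: "j < length r" "a = r!j" using \<open>a \<in> set r\<close> by (auto simp: in_set_conv_nth)
        have jl: "j < ncols M" using j i A \<open>r \<in> set A\<close> by auto
        have "a \<le> M!i!j" using A(3) i j jl A(1) by auto
        also have "M!i!j \<le> E" unfolding E_def
          using i A(1) jl
          by (intro member_le_sum[where f = "\<lambda>p. M!fst p!snd p" and i = "(i,j)", simplified]) auto
        finally show ?thesis .
      qed
      then show ?thesis using A \<open>r \<in> set A\<close> by (auto simp: R_def)
    qed
    then show ?thesis using A by auto
  qed
  have "decomp M \<subseteq> {xs. set xs \<subseteq> R \<and> length xs = nrows M} \<times> {xs. set xs \<subseteq> R \<and> length xs = nrows M}"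
  proof
    fix p assume "p \<in> decomp M"
    then obtain A B where p: "p = (A,B)" and d: "(A,B) \<in> decomp M" by (cases p) auto
    from d have "length A = nrows M" "length B = nrows M" "\<forall>r\<in>set A. length r = ncols M"
      "\<forall>r\<in>set B. length r = ncols M" "\<forall>i<nrows M. \<forall>j<ncols M. A ! i ! j + B ! i ! j = M ! i ! j"
      by (auto simp: decomp_def)
    then show "p \<in> {xs. set xs \<subseteq> R \<and> length xs = nrows M} \<times> {xs. set xs \<subseteq> R \<and> length xs = nrows M}" unfolding p
      by (intro SigmaI sub) (auto, metis le_add1, metis le_add2)
  qed
  then show ?thesis using finite_subset fL by blast
qed

definition hh :: "rat \<Rightarrow> rat \<Rightarrow> mat \<Rightarrow> rat" where
  "hh x y M = hilb (nrows M) x * hilb (ncols M) y"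

definition Wt :: "rat \<Rightarrow> rat \<Rightarrow> mat list \<Rightarrow> rat" where
  "Wt x y Ms = prod_list (map (hh x y) Ms)"

definition Tup :: "nat list \<Rightarrow> mat list set" where
  "Tup as = {Ms. length Ms = length as \<and> (\<forall>i<length as. packed (Ms!i) \<and> weight (Ms!i) = as!i)}"

lemma Tup_Nil: "Tup [] = {[]}"
  by (auto simp: Tup_def)

lemma Tup_Cons: "Tup (a#as) = (\<lambda>(M,Ms). M#Ms) ` (Pk a \<times> Tup as)"
proof (intro set_eqI iffI)
  fix Ms assume "Ms \<in> Tup (a#as)"
  then obtain M Ms' where Ms: "Ms = M # Ms'" and l: "length Ms' = length as"
    and c: "\<forall>i<Suc (length as). packed (Ms!i) \<and> weight (Ms!i) = (a#as)!i"
    by (auto simp: Tup_def length_Suc_conv)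
  have "M \<in> Pk a" using c[rule_format, of 0] by (simp add: Ms Pk_def)
  moreover have "Ms' \<in> Tup as" using l c by (auto simp: Tup_def Ms)
  ultimately show "Ms \<in> (\<lambda>(M,Ms). M#Ms) ` (Pk a \<times> Tup as)" using Ms by auto
next
  fix Ms assume "Ms \<in> (\<lambda>(M,Ms). M#Ms) ` (Pk a \<times> Tup as)"
  then show "Ms \<in> Tup (a#as)"
    by (auto simp: Tup_def Pk_def nth_Cons split: nat.splits)
qed

lemma inj_Cons: "inj_on (\<lambda>(M::mat, Ms). M#Ms) X"
  by (auto simp: inj_on_def)

lemma finite_Tup: "finite (Tup as)"
  by (induction as) (auto simp: Tup_Nil Tup_Cons finite_Pk)

lemma sum_Tup_Cons: "(\<Sum>Ms\<in>Tup (a#as). f Ms) = (\<Sum>M\<in>Pk a. \<Sum>Ms\<in>Tup as. f (M#Ms))"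
  unfolding Tup_Cons
  by (subst sum.reindex[OF inj_Cons]) (auto simp add: sum.cartesian_product intro!: sum.cong)

lemma prod_nth_list: "length Ms = n \<Longrightarrow> (\<Prod>i<n. f (Ms!i)) = prod_list (map f Ms)"
proof (induction Ms arbitrary: n)
  case Nil then show ?case by simp
next
  case (Cons M Ms) then show ?case by (auto simp del: prod.lessThan_Suc simp add: prod.lessThan_Suc_shift)
qed

lemma K_row_alt: "K_row x y as N = (\<Sum>Ms\<in>Tup as. if fd Ms = N then Wt x y Ms else 0)"
  unfolding K_row_def Tup_def[symmetric] fd_def[symmetric] Wt_def hh_def[symmetric]
  by (intro sum.cong refl) (auto simp: Tup_def prod_nth_list)

lemma Wt_Nil[simp]: "Wt x y [] = 1" and Wt_Cons[simp]: "Wt x y (M#Ms) = hh x y M * Wt x y Ms"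
  by (simp_all add: Wt_def)

lemma K_row_Nil: "K_row x y [] = unit_el"
  by (auto simp: K_row_alt Tup_Nil unit_el_def)

lemma K_row_Cons: "K_row x y (a#as) N =
   (\<Sum>M\<in>Pk a. \<Sum>Ms\<in>Tup as. if diag M (fd Ms) = N then hh x y M * Wt x y Ms else 0)"
  unfolding K_row_alt sum_Tup_Cons by (simp cong: if_cong)

lemma weight_Tup: "Ms \<in> Tup as \<Longrightarrow> (\<Sum>M\<leftarrow>Ms. weight M) = sum_list as"
proof (induction as arbitrary: Ms)
  case Nil then show ?case by (simp add: Tup_Nil)
next
  case (Cons a as)
  from Cons.prems obtain M Ms' where "Ms = M#Ms'" "M\<in>Pk a" "Ms'\<in>Tup as" by (auto simp: Tup_Cons)
  then show ?case using Cons.IH by (simp add: Pk_def)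
qed

lemma packed_Tup: "Ms \<in> Tup as \<Longrightarrow> \<forall>M\<in>set Ms. packed M"
  by (auto simp: Tup_def in_set_conv_nth)

lemma fd_Tup: "Ms \<in> Tup as \<Longrightarrow> fd Ms \<in> Pk (sum_list as)"
  using packed_fd[OF packed_Tup] weight_Tup weight_fd by (simp add: Pk_def)

lemma K_row_supp: "K_row x y as N \<noteq> 0 \<Longrightarrow> N \<in> Pk (sum_list as)"
proof -
  assume "K_row x y as N \<noteq> 0"
  then obtain Ms where "Ms \<in> Tup as" "(if fd Ms = N then Wt x y Ms else 0) \<noteq> 0"
    unfolding K_row_alt by (rule sum.not_neutral_contains_not_neutral)
  then show ?thesis using fd_Tup by (auto split: if_splits)
qed

lemma mult_if0: "(c::rat) * (if P then a else 0) = (if P then c * a else 0)" by simp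

lemma K_row_Cons2: "K_row x y (a#as) N =
   (\<Sum>M\<in>Pk a. \<Sum>N'\<in>Pk (sum_list as). if diag M N' = N then hh x y M * K_row x y as N' else 0)"
proof -
  have "(\<Sum>N'\<in>Pk (sum_list as). if diag M N' = N then hh x y M * K_row x y as N' else 0)
      = (\<Sum>Ms\<in>Tup as. if diag M (fd Ms) = N then hh x y M * Wt x y Ms else 0)" for M
  proof -
    have "(\<Sum>N'\<in>Pk (sum_list as). if diag M N' = N then hh x y M * K_row x y as N' else 0)
      = (\<Sum>N'\<in>Pk (sum_list as). \<Sum>Ms\<in>Tup as. if fd Ms = N' \<and> diag M N' = N then hh x y M * Wt x y Ms else 0)"
    proof (intro sum.cong refl)
      fix N' show "(if diag M N' = N then hh x y M * K_row x y as N' else 0)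
          = (\<Sum>Ms\<in>Tup as. if fd Ms = N' \<and> diag M N' = N then hh x y M * Wt x y Ms else 0)"
        unfolding K_row_alt by (cases "diag M N' = N") (simp_all add: sum_distrib_left mult_if0 cong: if_cong)
    qed
    also have "\<dots> = (\<Sum>Ms\<in>Tup as. \<Sum>N'\<in>Pk (sum_list as). if fd Ms = N' \<and> diag M N' = N then hh x y M * Wt x y Ms else 0)"
      by (rule sum.swap)
    also have "\<dots> = (\<Sum>Ms\<in>Tup as. if diag M (fd Ms) = N then hh x y M * Wt x y Ms else 0)"
    proof (intro sum.cong refl)
      fix Ms assume "Ms \<in> Tup as"
      then have "fd Ms \<in> Pk (sum_list as)" by (rule fd_Tup)
      have e: "\<And>N'. (if fd Ms = N' \<and> diag M N' = N then hh x y M * Wt x y Ms else 0)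
         = (if fd Ms = N' then (if diag M (fd Ms) = N then hh x y M * Wt x y Ms else 0) else 0)" by auto
      show "(\<Sum>N'\<in>Pk (sum_list as). if fd Ms = N' \<and> diag M N' = N then hh x y M * Wt x y Ms else 0)
          = (if diag M (fd Ms) = N then hh x y M * Wt x y Ms else 0)"
        unfolding e sum.delta'[OF finite_Pk] using \<open>fd Ms \<in> Pk (sum_list as)\<close> by (simp only: if_True)
    qed
    finally show ?thesis .
  qed
  then show ?thesis by (simp only: K_row_Cons)
qed

lemma Pk0: "Pk 0 = {[]}"
proof -
  have "M = []" if "packed M" "weight M = 0" for M
  proof (rule ccontr)
    assume "M \<noteq> []"
    then obtain r where "r \<in> set M" by (cases M) auto
    then have "1 \<le> sum_list r" using that(1) by (auto simp: packed_def intro!: row_pos[simplified])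
    moreover have "sum_list r \<le> weight M" using \<open>r \<in> set M\<close> by (auto simp: weight_def intro!: member_le_sum_list)
    ultimately show False using that(2) by simp
  qed
  then show ?thesis by (auto simp: Pk_def)
qed

lemma hh_Nil[simp]: "hh x y [] = 1"
  by (simp add: hh_def hilb_def)

lemma K_row_0: "K_row x y (0#as) = K_row x y as"
proof
  fix N
  have "K_row x y (0#as) N = (\<Sum>N'\<in>Pk (sum_list as). if N' = N then K_row x y as N' else 0)"
    unfolding K_row_Cons2 Pk0 by (simp cong: if_cong)
  also have "\<dots> = K_row x y as N"
    using finite_Pk K_row_supp[of x y as N] by (auto simp: sum.delta')
  finally show "K_row x y (0#as) N = K_row x y as N" .
qed

lemma K_row_filter: "K_row x y (filter (\<lambda>a. a \<noteq> 0) as) = K_row x y as"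
proof (induction as)
  case Nil then show ?case by simp
next
  case (Cons a as)
  have s: "sum_list (filter (\<lambda>a. a \<noteq> 0) as) = sum_list as" "sum_list (filter ((<) 0) as) = sum_list as"
    by (induction as) auto
  show ?case
  proof (cases "a = 0")
    case True then show ?thesis using Cons by (simp add: K_row_0)
  next
    case False
    then show ?thesis using Cons by (auto simp: K_row_Cons2 s fun_eq_iff cong: if_cong)
  qed
qed

definition mk :: "nat \<Rightarrow> nat \<Rightarrow> (nat \<Rightarrow> nat \<Rightarrow> nat) \<Rightarrow> mat" where
  "mk k l f = map (\<lambda>i. map (f i) [0..<l]) [0..<k]"

definition shape :: "nat \<Rightarrow> nat \<Rightarrow> mat \<Rightarrow> bool" where
  "shape k l A \<longleftrightarrow> length A = k \<and> (\<forall>r\<in>set A. length r = l)"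

lemma mk_nth[simp]: "i < k \<Longrightarrow> j < l \<Longrightarrow> mk k l f ! i ! j = f i j"
  by (simp add: mk_def)

lemma length_mk[simp]: "length (mk k l f) = k"
  by (simp add: mk_def)

lemma shape_mk: "shape k l (mk k l f)"
  by (auto simp: shape_def mk_def)

lemma shape_nth: "shape k l A \<Longrightarrow> i < k \<Longrightarrow> length (A!i) = l"
  by (auto simp: shape_def)

lemma mk_eq:
  assumes "shape k l A" "shape k l B" "\<And>i j. i < k \<Longrightarrow> j < l \<Longrightarrow> A!i!j = B!i!j"
  shows "A = B"
proof (rule nth_equalityI)
  show "length A = length B" using assms by (simp add: shape_def)
  fix i assume "i < length A"
  then have i: "i < k" using assms by (simp add: shape_def)
  show "A!i = B!i"
    by (rule nth_equalityI) (use assms i shape_nth in auto)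
qed

lemma mk_eta: "shape k l A \<Longrightarrow> mk k l (\<lambda>i j. A!i!j) = A"
  by (rule mk_eq[OF shape_mk]) auto

lemma mk_cong: "(\<And>i j. i < k \<Longrightarrow> j < l \<Longrightarrow> f i j = g i j) \<Longrightarrow> mk k l f = mk k l g"
  by (rule mk_eq[OF shape_mk shape_mk]) auto

lemma ncols_mk: "ncols (mk k l f) = (if k = 0 then 0 else l)"
proof (cases "k = 0")
  case False
  then have "mk k l f \<noteq> []" "hd (mk k l f) = mk k l f ! 0" by (auto simp: mk_def hd_conv_nth)
  then show ?thesis using False by (simp add: ncols_def mk_def)
qed (simp add: mk_def)

lemma rect_shape: "rect A \<longleftrightarrow> shape (length A) (ncols A) A"
  by (simp add: rect_def shape_def)

lemma shape_ncols: "shape k l A \<Longrightarrow> k \<noteq> 0 \<Longrightarrow> ncols A = l"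
  by (cases A) (auto simp: shape_def ncols_def)

lemma shape_rect: "shape k l A \<Longrightarrow> rect A"
  by (cases "k = 0") (auto simp: rect_def shape_def shape_ncols)

definition pos :: "nat list \<Rightarrow> nat \<Rightarrow> nat" where
  "pos xs x = (THE r. r < length xs \<and> xs!r = x)"

lemma pos_nth: "distinct xs \<Longrightarrow> r < length xs \<Longrightarrow> pos xs (xs!r) = r"
  unfolding pos_def by (rule the_equality) (auto simp: nth_eq_iff_index_eq)

lemma nth_pos: "distinct xs \<Longrightarrow> x \<in> set xs \<Longrightarrow> pos xs x < length xs \<and> xs ! pos xs x = x"
  by (metis in_set_conv_nth pos_nth)

definition nzr :: "mat \<Rightarrow> nat set" where
  "nzr A = {i. i < length A \<and> (\<exists>j<ncols A. A!i!j \<noteq> 0)}"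

definition nzc :: "mat \<Rightarrow> nat set" where
  "nzc A = {j. j < ncols A \<and> (\<exists>i<length A. A!i!j \<noteq> 0)}"

definition rl :: "mat \<Rightarrow> nat list" where
  "rl A = filter (\<lambda>i. i \<in> nzr A) [0..<length A]"

definition cl :: "mat \<Rightarrow> nat list" where
  "cl A = filter (\<lambda>j. j \<in> nzc A) [0..<ncols A]"

lemma set_rl: "set (rl A) = nzr A" by (auto simp: rl_def nzr_def)
lemma set_cl: "set (cl A) = nzc A" by (auto simp: cl_def nzc_def)
lemma distinct_rl: "distinct (rl A)" by (simp add: rl_def)
lemma distinct_cl: "distinct (cl A)" by (simp add: cl_def)
lemma length_rl: "length (rl A) = card (nzr A)"
  using distinct_card[OF distinct_rl, of A] by (simp add: set_rl)
lemma length_cl: "length (cl A) = card (nzc A)"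
  using distinct_card[OF distinct_cl, of A] by (simp add: set_cl)
lemma nzr_sub: "nzr A \<subseteq> {..<length A}" by (auto simp: nzr_def)
lemma nzc_sub: "nzc A \<subseteq> {..<ncols A}" by (auto simp: nzc_def)

lemma filter_nth_map: "filter P xs = map (nth xs) (filter (\<lambda>i. P (xs!i)) [0..<length xs])"
proof -
  have "filter P xs = filter P (map (nth xs) [0..<length xs])" by (simp add: map_nth)
  also have "\<dots> = map (nth xs) (filter (\<lambda>i. P (xs!i)) [0..<length xs])"
    by (simp add: filter_map comp_def)
  finally show ?thesis .
qed

lemma pk_alt:
  assumes "rect A"
  shows "pk A = map (\<lambda>i. map (\<lambda>j. A!i!j) (cl A)) (rl A)"
proof -
  have r: "length (A!i) = ncols A" if "i < length A" for i
    using assms that by (auto simp: rect_def)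
  have rows: "filter (\<lambda>r. \<exists>a\<in>set r. a \<noteq> 0) A = map (nth A) (rl A)"
    unfolding rl_def apply (subst filter_nth_map)
  proof (rule arg_cong[where f = "map (nth A)"], rule filter_cong[OF refl])
    fix i assume "i \<in> set [0..<length A]"
    then have i: "i < length A" by simp
    show "(\<exists>a\<in>set (A!i). a \<noteq> 0) = (i \<in> nzr A)"
      unfolding nzr_def using i r[OF i] by (auto simp: in_set_conv_nth) (metis nth_mem)
  qed
  have cols: "filter (\<lambda>j. \<exists>r'\<in>set A. r' ! j \<noteq> 0) [0..<ncols A] = cl A"
    unfolding cl_def
  proof (rule filter_cong[OF refl])
    fix j assume "j \<in> set [0..<ncols A]"
    then have j: "j < ncols A" by simp
    show "(\<exists>r'\<in>set A. r' ! j \<noteq> 0) = (j \<in> nzc A)"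
      unfolding nzc_def using j by (auto simp: in_set_conv_nth) (metis nth_mem)
  qed
  show ?thesis unfolding pk_def rows cols by simp
qed


lemma weight_mk: "weight (mk k l f) = (\<Sum>i<k. \<Sum>j<l. f i j)"
  by (simp add: weight_def mk_def interv_sum_list_conv_sum_set_nat comp_def atLeast0LessThan)

lemma weight_shape: "shape k l A \<Longrightarrow> weight A = (\<Sum>i<k. \<Sum>j<l. A!i!j)"
  using weight_mk[of k l "\<lambda>i j. A!i!j"] mk_eta[of k l A] by simp

lemma nzr_empty: "rect A \<Longrightarrow> nzr A = {} \<Longrightarrow> nzc A = {}"
  by (auto simp: nzr_def nzc_def)

lemma rect_len: "rect A \<Longrightarrow> i < length A \<Longrightarrow> length (A!i) = ncols A"
  by (simp add: rect_def)

lemma packed_pk: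
  assumes "rect A" shows "packed (pk A)"
proof -
  let ?R = "rl A" and ?C = "cl A"
  have pk: "pk A = map (\<lambda>i. map (\<lambda>j. A!i!j) ?C) ?R" by (rule pk_alt[OF assms])
  have nc: "ncols (pk A) = (if ?R = [] then 0 else length ?C)"
    unfolding pk by (cases ?R) (auto simp: ncols_def)
  have 1: "\<forall>r\<in>set (pk A). length r = ncols (pk A)"
    unfolding nc by (auto simp: pk)
  have 2: "\<forall>r\<in>set (pk A). \<exists>a\<in>set r. a \<noteq> 0"
  proof
    fix r assume "r \<in> set (pk A)"
    then obtain i where i: "i \<in> nzr A" "r = map (\<lambda>j. A!i!j) ?C" by (auto simp: pk set_rl)
    then obtain j where j: "j < ncols A" "A!i!j \<noteq> 0" and il: "i < length A" by (auto simp: nzr_def)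
    then have "j \<in> set ?C" by (auto simp: set_cl nzc_def)
    then show "\<exists>a\<in>set r. a \<noteq> 0" using i j by auto
  qed
  have 3: "\<exists>r\<in>set (pk A). r ! c \<noteq> 0" if c: "c < ncols (pk A)" for c
  proof -
    have ne: "?R \<noteq> []" and cC: "c < length ?C" using c by (auto simp: nc split: if_splits)
    have "?C ! c \<in> nzc A" using cC nth_mem set_cl by metis
    then obtain i where i: "i < length A" "A!i!(?C!c) \<noteq> 0" by (auto simp: nzc_def)
    then have "i \<in> set ?R" using \<open>?C ! c \<in> nzc A\<close> by (auto simp: set_rl nzr_def nzc_def)
    then show ?thesis using i cC by (auto simp: pk intro!: bexI[of _ "map (\<lambda>j. A!i!j) ?C"])
  qed
  show ?thesis using 1 2 3 by (simp add: packed_def)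
qed

lemma ncols_pk: "rect A \<Longrightarrow> ncols (pk A) = card (nzc A)"
proof -
  assume r: "rect A"
  show ?thesis
  proof (cases "rl A = []")
    case True
    then have "nzr A = {}" using set_rl by (metis set_empty)
    then show ?thesis using nzr_empty[OF r] True by (simp add: pk_alt[OF r])
  next
    case False
    then show ?thesis by (cases "rl A") (auto simp: pk_alt[OF r] ncols_def length_cl)
  qed
qed

lemma nrows_pk: "rect A \<Longrightarrow> nrows (pk A) = card (nzr A)"
  by (simp add: pk_alt nrows_def length_rl)

lemma weight_pk:
  assumes "rect A" shows "weight (pk A) = weight A"
proof -
  let ?k = "length A" and ?l = "ncols A"
  have "weight (pk A) = (\<Sum>i\<in>nzr A. \<Sum>j\<in>nzc A. A!i!j)"
    unfolding pk_alt[OF assms] weight_def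
    by (simp add: comp_def sum_list_distinct_conv_sum_set distinct_rl distinct_cl set_rl set_cl)
  also have "\<dots> = (\<Sum>i\<in>nzr A. \<Sum>j<?l. A!i!j)"
  proof (rule sum.cong[OF refl], rule sum.mono_neutral_left)
    fix i assume "i \<in> nzr A"
    then have i: "i < ?k" by (simp add: nzr_def)
    show "\<forall>j\<in>{..<?l} - nzc A. A!i!j = 0" using i by (auto simp: nzc_def)
  qed (auto simp: nzc_def)
  also have "\<dots> = (\<Sum>i<?k. \<Sum>j<?l. A!i!j)"
    by (rule sum.mono_neutral_left) (auto simp: nzr_def)
  also have "\<dots> = weight A"
    using weight_shape[of ?k ?l A] assms by (simp add: rect_shape)
  finally show ?thesis .
qed

lemma sum_prod: "sum f (A \<times> B) = (\<Sum>a\<in>A. \<Sum>b\<in>B. f (a,b))"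
  by (simp add: sum.cartesian_product)

lemma cop_sum: "cop_basis M w = (\<Sum>z\<in>decomp M. if (pk (fst z), pk (snd z)) = w then 1 else 0)"
proof -
  have "{(A, B) \<in> decomp M. (pk A, pk B) = w} = {z \<in> decomp M. (pk (fst z), pk (snd z)) = w}"
    by auto
  then show ?thesis unfolding cop_basis_def using finite_decomp[of M]
    by (simp add: sum.If_cases Int_def conj_commute)
qed

definition dg :: "nat \<Rightarrow> nat \<Rightarrow> mat \<Rightarrow> mat \<Rightarrow> nat \<Rightarrow> nat \<Rightarrow> nat" where
  "dg k1 l1 A1 A2 i j = (if i < k1 then (if j < l1 then A1!i!j else 0) else (if j < l1 then 0 else A2!(i-k1)!(j-l1)))"

lemma diag_mk:
  assumes s1: "shape k1 l1 A1" and n1: "ncols A1 = l1" and s2: "shape k2 l2 A2" and n2: "ncols A2 = l2"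
  shows "diag A1 A2 = mk (k1+k2) (l1+l2) (dg k1 l1 A1 A2)"
proof (rule mk_eq[OF _ shape_mk])
  have l1: "length A1 = k1" and l2: "length A2 = k2" using s1 s2 by (auto simp: shape_def)
  show "shape (k1 + k2) (l1 + l2) (diag A1 A2)"
    using s1 s2 n1 n2 by (auto simp: shape_def diag_def)
  fix i j assume i: "i < k1 + k2" and j: "j < l1 + l2"
  show "diag A1 A2 ! i ! j = mk (k1 + k2) (l1 + l2) (dg k1 l1 A1 A2) ! i ! j"
  proof (cases "i < k1")
    case True
    then have "diag A1 A2 ! i = A1!i @ replicate l2 0" using l1 n2 by (simp add: diag_def nth_append)
    moreover have "length (A1!i) = l1" using s1 True by (simp add: shape_nth)
    ultimately show ?thesis using True i j by (simp add: dg_def nth_append)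
  next
    case False
    then have "diag A1 A2 ! i = replicate l1 0 @ A2!(i-k1)" using l1 l2 n1 i by (simp add: diag_def nth_append)
    then show ?thesis using False i j by (simp add: dg_def nth_append)
  qed
qed

lemma shape_diag:
  assumes "shape k1 l1 A1" "ncols A1 = l1" "shape k2 l2 A2" "ncols A2 = l2"
  shows "shape (k1+k2) (l1+l2) (diag A1 A2)"
  using diag_mk[OF assms] shape_mk by metis

lemma diag_nth:
  assumes "shape k1 l1 A1" "ncols A1 = l1" "shape k2 l2 A2" "ncols A2 = l2" "i < k1+k2" "j < l1+l2"
  shows "diag A1 A2 ! i ! j = dg k1 l1 A1 A2 i j"
  using diag_mk[OF assms(1-4)] assms(5,6) by simp

lemma nzr_diag1:
  assumes "shape k1 l1 A1" "ncols A1 = l1" "shape k2 l2 A2" "ncols A2 = l2" "i < k1"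
  shows "i \<in> nzr (diag A1 A2) \<longleftrightarrow> i \<in> nzr A1"
proof -
  have l: "length A1 = k1" "length A2 = k2" using assms by (auto simp: shape_def)
  have "(\<exists>j<l1+l2. dg k1 l1 A1 A2 i j \<noteq> 0) \<longleftrightarrow> (\<exists>j<l1. A1!i!j \<noteq> 0)"
    using assms(5) by (auto simp: dg_def)
  then show ?thesis using assms diag_nth[OF assms(1-4)]
    by (auto simp: nzr_def ncols_diag l)
qed

lemma nzr_diag2:
  assumes "shape k1 l1 A1" "ncols A1 = l1" "shape k2 l2 A2" "ncols A2 = l2" "i < k2"
  shows "i + k1 \<in> nzr (diag A1 A2) \<longleftrightarrow> i \<in> nzr A2"
proof -
  have l: "length A1 = k1" "length A2 = k2" using assms by (auto simp: shape_def)
  have "(\<exists>j<l1+l2. dg k1 l1 A1 A2 (i+k1) j \<noteq> 0) \<longleftrightarrow> (\<exists>j<l2. A2!i!j \<noteq> 0)"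
  proof
    assume "\<exists>j<l1+l2. dg k1 l1 A1 A2 (i+k1) j \<noteq> 0"
    then obtain j where "j < l1+l2" "dg k1 l1 A1 A2 (i+k1) j \<noteq> 0" by blast
    then show "\<exists>j<l2. A2!i!j \<noteq> 0" by (intro exI[of _ "j - l1"]) (auto simp: dg_def split: if_splits)
  next
    assume "\<exists>j<l2. A2!i!j \<noteq> 0"
    then obtain j where "j < l2" "A2!i!j \<noteq> 0" by blast
    then show "\<exists>j<l1+l2. dg k1 l1 A1 A2 (i+k1) j \<noteq> 0" by (intro exI[of _ "j + l1"]) (auto simp: dg_def)
  qed
  then show ?thesis using assms diag_nth[OF assms(1-4)]
    by (auto simp: nzr_def ncols_diag l)
qed

lemma nzc_diag1:
  assumes "shape k1 l1 A1" "ncols A1 = l1" "shape k2 l2 A2" "ncols A2 = l2" "j < l1"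
  shows "j \<in> nzc (diag A1 A2) \<longleftrightarrow> j \<in> nzc A1"
proof -
  have l: "length A1 = k1" "length A2 = k2" using assms by (auto simp: shape_def)
  have "(\<exists>i<k1+k2. dg k1 l1 A1 A2 i j \<noteq> 0) \<longleftrightarrow> (\<exists>i<k1. A1!i!j \<noteq> 0)"
    using assms(5) by (auto simp: dg_def)
  then show ?thesis using assms diag_nth[OF assms(1-4)]
    by (auto simp: nzc_def ncols_diag l)
qed

lemma nzc_diag2:
  assumes "shape k1 l1 A1" "ncols A1 = l1" "shape k2 l2 A2" "ncols A2 = l2" "j < l2"
  shows "j + l1 \<in> nzc (diag A1 A2) \<longleftrightarrow> j \<in> nzc A2"
proof -
  have l: "length A1 = k1" "length A2 = k2" using assms by (auto simp: shape_def)
  have "(\<exists>i<k1+k2. dg k1 l1 A1 A2 i (j+l1) \<noteq> 0) \<longleftrightarrow> (\<exists>i<k2. A2!i!j \<noteq> 0)"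
  proof
    assume "\<exists>i<k1+k2. dg k1 l1 A1 A2 i (j+l1) \<noteq> 0"
    then obtain i where "i < k1+k2" "dg k1 l1 A1 A2 i (j+l1) \<noteq> 0" by blast
    then show "\<exists>i<k2. A2!i!j \<noteq> 0" by (intro exI[of _ "i - k1"]) (auto simp: dg_def split: if_splits)
  next
    assume "\<exists>i<k2. A2!i!j \<noteq> 0"
    then obtain i where "i < k2" "A2!i!j \<noteq> 0" by blast
    then show "\<exists>i<k1+k2. dg k1 l1 A1 A2 i (j+l1) \<noteq> 0" by (intro exI[of _ "i + k1"]) (auto simp: dg_def)
  qed
  then show ?thesis using assms diag_nth[OF assms(1-4)]
    by (auto simp: nzc_def ncols_diag l)
qed

lemma filter_split:
  "filter P [0..<a+b] = filter P [0..<a] @ map (\<lambda>i. i + a) (filter (\<lambda>i. P (i + a)) [0..<b])"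
proof -
  have "[0..<a+b] = [0..<a] @ [a..<a+b]" by (rule upt_add_eq_append) simp
  moreover have "[a..<a+b] = map (\<lambda>i. i + a) [0..<b]" by (simp add: map_add_upt add.commute)
  ultimately show ?thesis by (simp add: filter_map comp_def)
qed

lemma rl_diag:
  assumes "shape k1 l1 A1" "ncols A1 = l1" "shape k2 l2 A2" "ncols A2 = l2"
  shows "rl (diag A1 A2) = rl A1 @ map (\<lambda>i. i + k1) (rl A2)"
proof -
  have l: "length A1 = k1" "length A2 = k2" using assms by (auto simp: shape_def)
  have "rl (diag A1 A2) = filter (\<lambda>i. i \<in> nzr (diag A1 A2)) [0..<k1] @
      map (\<lambda>i. i + k1) (filter (\<lambda>i. i + k1 \<in> nzr (diag A1 A2)) [0..<k2])"
    unfolding rl_def length_diag l by (rule filter_split)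
  also have "\<dots> = rl A1 @ map (\<lambda>i. i + k1) (rl A2)"
    unfolding rl_def l using nzr_diag1[OF assms] nzr_diag2[OF assms]
    by (intro arg_cong2[where f = "(@)"] arg_cong[where f = "map _"] filter_cong) auto
  finally show ?thesis .
qed

lemma cl_diag:
  assumes "shape k1 l1 A1" "ncols A1 = l1" "shape k2 l2 A2" "ncols A2 = l2"
  shows "cl (diag A1 A2) = cl A1 @ map (\<lambda>j. j + l1) (cl A2)"
proof -
  have "cl (diag A1 A2) = filter (\<lambda>j. j \<in> nzc (diag A1 A2)) [0..<l1] @
      map (\<lambda>j. j + l1) (filter (\<lambda>j. j + l1 \<in> nzc (diag A1 A2)) [0..<l2])"
    unfolding cl_def ncols_diag assms(2,4) by (rule filter_split)
  also have "\<dots> = cl A1 @ map (\<lambda>j. j + l1) (cl A2)"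
    unfolding cl_def assms(2,4) using nzc_diag1[OF assms] nzc_diag2[OF assms]
    by (intro arg_cong2[where f = "(@)"] arg_cong[where f = "map _"] filter_cong) auto
  finally show ?thesis .
qed

lemma pk_diag:
  assumes a: "shape k1 l1 A1" "ncols A1 = l1" "shape k2 l2 A2" "ncols A2 = l2"
  shows "pk (diag A1 A2) = diag (pk A1) (pk A2)"
proof -
  have r1: "rect A1" and r2: "rect A2" using a shape_rect by blast+
  have rD: "rect (diag A1 A2)" using shape_diag[OF a] shape_rect by blast
  have l: "length A1 = k1" "length A2 = k2" using a by (auto simp: shape_def)
  have rl1: "\<forall>i\<in>set (rl A1). i < k1" and rl2: "\<forall>i\<in>set (rl A2). i < k2"
    using l by (auto simp: set_rl nzr_def)
  have cl1: "\<forall>j\<in>set (cl A1). j < l1" and cl2: "\<forall>j\<in>set (cl A2). j < l2"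
    using a by (auto simp: set_cl nzc_def)
  have e: "diag A1 A2 ! i ! j = dg k1 l1 A1 A2 i j" if "i < k1+k2" "j < l1+l2" for i j
    by (rule diag_nth[OF a that])
  have e1: "diag A1 A2 ! i ! j = A1!i!j" if "i < k1" "j < l1" for i j
    using e[of i j] that by (simp add: dg_def)
  have e2: "diag A1 A2 ! i ! (j + l1) = 0" if "i < k1" "j < l2" for i j
    using e[of i "j + l1"] that by (simp add: dg_def)
  have e3: "diag A1 A2 ! (i + k1) ! j = 0" if "i < k2" "j < l1" for i j
    using e[of "i + k1" j] that by (simp add: dg_def)
  have e4: "diag A1 A2 ! (i + k1) ! (j + l1) = A2!i!j" if "i < k2" "j < l2" for i j
    using e[of "i + k1" "j + l1"] that by (simp add: dg_def)
  have nc: "ncols (pk A1) = length (cl A1)" "ncols (pk A2) = length (cl A2)"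
    using ncols_pk[OF r1] ncols_pk[OF r2] by (simp_all add: length_cl)
  have "pk (diag A1 A2) = map (\<lambda>i. map (\<lambda>j. diag A1 A2 ! i ! j) (cl A1 @ map (\<lambda>j. j + l1) (cl A2)))
        (rl A1 @ map (\<lambda>i. i + k1) (rl A2))"
    by (simp add: pk_alt[OF rD] rl_diag[OF a] cl_diag[OF a])
  also have "\<dots> = map (\<lambda>i. map (\<lambda>j. A1!i!j) (cl A1) @ replicate (length (cl A2)) 0) (rl A1) @
      map (\<lambda>i. replicate (length (cl A1)) 0 @ map (\<lambda>j. A2!i!j) (cl A2)) (rl A2)"
  proof -
    have "map (\<lambda>j. diag A1 A2 ! i ! j) (cl A1 @ map (\<lambda>j. j + l1) (cl A2))
       = map (\<lambda>j. A1!i!j) (cl A1) @ replicate (length (cl A2)) 0" if "i \<in> set (rl A1)" for i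
    proof -
      have i: "i < k1" using that rl1 by blast
      have "map (\<lambda>j. diag A1 A2 ! i ! j) (cl A1) = map (\<lambda>j. A1!i!j) (cl A1)"
        using cl1 i by (intro map_cong refl) (simp add: e1)
      moreover have "map (\<lambda>j. diag A1 A2 ! i ! j) (map (\<lambda>j. j + l1) (cl A2)) = replicate (length (cl A2)) 0"
        using cl2 i by (simp add: e2 map_replicate_const[symmetric] cong: map_cong)
      ultimately show ?thesis by simp
    qed
    moreover have "map (\<lambda>j. diag A1 A2 ! (i + k1) ! j) (cl A1 @ map (\<lambda>j. j + l1) (cl A2))
       = replicate (length (cl A1)) 0 @ map (\<lambda>j. A2!i!j) (cl A2)" if "i \<in> set (rl A2)" for i
    proof -
      have i: "i < k2" using that rl2 by blast
      have "map (\<lambda>j. diag A1 A2 ! (i+k1) ! j) (cl A1) = replicate (length (cl A1)) 0"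
        using cl1 i by (simp add: e3 map_replicate_const[symmetric] cong: map_cong)
      moreover have "map (\<lambda>j. diag A1 A2 ! (i + k1) ! j) (map (\<lambda>j. j + l1) (cl A2)) = map (\<lambda>j. A2!i!j) (cl A2)"
        using cl2 i by (simp add: e4 cong: map_cong)
      ultimately show ?thesis by simp
    qed
    ultimately show ?thesis by (simp cong: map_cong)
  qed
  also have "\<dots> = diag (pk A1) (pk A2)"
    unfolding diag_def[of "pk A1" "pk A2"] nc by (simp add: pk_alt[OF r1] pk_alt[OF r2])
  finally show ?thesis .
qed


lemma packed_shape: "packed M \<Longrightarrow> shape (nrows M) (ncols M) M"
  by (simp add: packed_def shape_def nrows_def)

lemma packed_nrows0: "packed M \<Longrightarrow> nrows M = 0 \<Longrightarrow> ncols M = 0"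
  by (simp add: nrows_def)

lemma decomp_char: "(A,B) \<in> decomp M \<longleftrightarrow> shape (nrows M) (ncols M) A \<and> shape (nrows M) (ncols M) B \<and>
   (\<forall>i<nrows M. \<forall>j<ncols M. A!i!j + B!i!j = M!i!j)"
  by (auto simp: decomp_def shape_def)

lemma ncols_dec: "packed M \<Longrightarrow> shape (nrows M) (ncols M) A \<Longrightarrow> ncols A = ncols M"
  by (cases "nrows M = 0") (auto simp: shape_def shape_ncols packed_nrows0)

lemma ncols_mk': "(k = 0 \<Longrightarrow> l = 0) \<Longrightarrow> ncols (mk k l f) = l"
  by (simp add: ncols_mk)

lemma diag_inj:
  assumes "shape k1 l1 A1" "ncols A1 = l1" "shape k2 l2 A2" "ncols A2 = l2"
    "shape k1 l1 A1'" "ncols A1' = l1" "shape k2 l2 A2'" "ncols A2' = l2"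
    "diag A1 A2 = diag A1' A2'"
  shows "A1 = A1' \<and> A2 = A2'"
proof
  have e: "dg k1 l1 A1 A2 i j = dg k1 l1 A1' A2' i j" if "i < k1 + k2" "j < l1 + l2" for i j
    using diag_nth[OF assms(1-4) that] diag_nth[OF assms(5-8) that] assms(9) by simp
  show "A1 = A1'"
  proof (rule mk_eq[OF assms(1,5)])
    fix i j assume "i < k1" "j < l1" then show "A1!i!j = A1'!i!j" using e[of i j] by (simp add: dg_def)
  qed
  show "A2 = A2'"
  proof (rule mk_eq[OF assms(3,7)])
    fix i j assume "i < k2" "j < l2" then show "A2!i!j = A2'!i!j" using e[of "i+k1" "j+l1"] by (simp add: dg_def)
  qed
qed

definition Phi :: "(mat \<times> mat) \<times> (mat \<times> mat) \<Rightarrow> mat \<times> mat" where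
  "Phi z = (diag (fst (fst z)) (fst (snd z)), diag (snd (fst z)) (snd (snd z)))"

lemma decomp_diag:
  assumes pM: "packed M" and pN: "packed N"
  shows "bij_betw Phi (decomp M \<times> decomp N) (decomp (diag M N))"
proof -
  define k1 l1 k2 l2 where "k1 = nrows M" "l1 = ncols M" "k2 = nrows N" "l2 = ncols N"
  have sM: "shape k1 l1 M" "ncols M = l1" and sN: "shape k2 l2 N" "ncols N = l2"
    using packed_shape[OF pM] packed_shape[OF pN] by (auto simp: k1_l1_k2_l2_def)
  have z1: "k1 = 0 \<Longrightarrow> l1 = 0" and z2: "k2 = 0 \<Longrightarrow> l2 = 0"
    using packed_nrows0[OF pM] packed_nrows0[OF pN] by (auto simp: k1_l1_k2_l2_def)
  have nD: "nrows (diag M N) = k1 + k2" "ncols (diag M N) = l1 + l2"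
    by (simp_all add: nrows_diag ncols_diag k1_l1_k2_l2_def)
  have eM: "diag M N ! i ! j = dg k1 l1 M N i j" if "i < k1+k2" "j < l1+l2" for i j
    by (rule diag_nth[OF sM sN that])
  have dM: "(A,B) \<in> decomp M \<longleftrightarrow> shape k1 l1 A \<and> shape k1 l1 B \<and> (\<forall>i<k1. \<forall>j<l1. A!i!j + B!i!j = M!i!j)" for A B
    by (simp add: decomp_char k1_l1_k2_l2_def)
  have dN: "(A,B) \<in> decomp N \<longleftrightarrow> shape k2 l2 A \<and> shape k2 l2 B \<and> (\<forall>i<k2. \<forall>j<l2. A!i!j + B!i!j = N!i!j)" for A B
    by (simp add: decomp_char k1_l1_k2_l2_def)
  have dD: "(A,B) \<in> decomp (diag M N) \<longleftrightarrow> shape (k1+k2) (l1+l2) A \<and> shape (k1+k2) (l1+l2) B \<and>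
      (\<forall>i<k1+k2. \<forall>j<l1+l2. A!i!j + B!i!j = dg k1 l1 M N i j)" for A B
    by (auto simp: decomp_char nD eM)
  have nc1: "ncols A = l1" if "shape k1 l1 A" for A
    using ncols_dec[OF pM] that by (simp add: k1_l1_k2_l2_def)
  have nc2: "ncols A = l2" if "shape k2 l2 A" for A
    using ncols_dec[OF pN] that by (simp add: k1_l1_k2_l2_def)
  show ?thesis
  proof (rule bij_betwI')
    fix z z' assume z: "z \<in> decomp M \<times> decomp N" and z': "z' \<in> decomp M \<times> decomp N"
    obtain A1 B1 A2 B2 where zz: "z = ((A1,B1),(A2,B2))" by (metis prod.collapse)
    obtain A1' B1' A2' B2' where zz': "z' = ((A1',B1'),(A2',B2'))" by (metis prod.collapse)
    have s: "shape k1 l1 A1" "shape k1 l1 B1" "shape k2 l2 A2" "shape k2 l2 B2"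
      "shape k1 l1 A1'" "shape k1 l1 B1'" "shape k2 l2 A2'" "shape k2 l2 B2'"
      using z z' by (auto simp: zz zz' dM dN)
    show "(Phi z = Phi z') = (z = z')"
    proof
      assume "Phi z = Phi z'"
      then have "diag A1 A2 = diag A1' A2'" "diag B1 B2 = diag B1' B2'" by (auto simp: Phi_def zz zz')
      then show "z = z'" using diag_inj[OF s(1) nc1[OF s(1)] s(3) nc2[OF s(3)] s(5) nc1[OF s(5)] s(7) nc2[OF s(7)]]
        diag_inj[OF s(2) nc1[OF s(2)] s(4) nc2[OF s(4)] s(6) nc1[OF s(6)] s(8) nc2[OF s(8)]]
        by (simp add: zz zz')
    qed simp
  next
    fix z assume z: "z \<in> decomp M \<times> decomp N"
    obtain A1 B1 A2 B2 where zz: "z = ((A1,B1),(A2,B2))" by (metis prod.collapse)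
    have s: "shape k1 l1 A1" "shape k1 l1 B1" "shape k2 l2 A2" "shape k2 l2 B2"
      and e1: "\<forall>i<k1. \<forall>j<l1. A1!i!j + B1!i!j = M!i!j" and e2: "\<forall>i<k2. \<forall>j<l2. A2!i!j + B2!i!j = N!i!j"
      using z by (auto simp: zz dM dN)
    have "(\<forall>i<k1+k2. \<forall>j<l1+l2. dg k1 l1 A1 A2 i j + dg k1 l1 B1 B2 i j = dg k1 l1 M N i j)"
      using e1 e2 by (auto simp: dg_def)
    then show "Phi z \<in> decomp (diag M N)"
      unfolding Phi_def zz fst_conv snd_conv dD
      using shape_diag[OF s(1) nc1[OF s(1)] s(3) nc2[OF s(3)]] shape_diag[OF s(2) nc1[OF s(2)] s(4) nc2[OF s(4)]]
        diag_nth[OF s(1) nc1[OF s(1)] s(3) nc2[OF s(3)]] diag_nth[OF s(2) nc1[OF s(2)] s(4) nc2[OF s(4)]]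
      by auto
  next
    fix w assume w: "w \<in> decomp (diag M N)"
    obtain A B where ww: "w = (A,B)" by (cases w)
    have sA: "shape (k1+k2) (l1+l2) A" and sB: "shape (k1+k2) (l1+l2) B"
      and eAB: "\<forall>i<k1+k2. \<forall>j<l1+l2. A!i!j + B!i!j = dg k1 l1 M N i j"
      using w by (auto simp: ww dD)
    define A1 where "A1 = mk k1 l1 (\<lambda>i j. A!i!j)"
    define B1 where "B1 = mk k1 l1 (\<lambda>i j. B!i!j)"
    define A2 where "A2 = mk k2 l2 (\<lambda>i j. A!(i+k1)!(j+l1))"
    define B2 where "B2 = mk k2 l2 (\<lambda>i j. B!(i+k1)!(j+l1))"
    have s: "shape k1 l1 A1" "shape k1 l1 B1" "shape k2 l2 A2" "shape k2 l2 B2"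
      by (simp_all add: A1_def B1_def A2_def B2_def shape_mk)
    have n: "ncols A1 = l1" "ncols B1 = l1" "ncols A2 = l2" "ncols B2 = l2"
      using z1 z2 by (simp_all add: A1_def B1_def A2_def B2_def ncols_mk')
    have in1: "(A1,B1) \<in> decomp M" unfolding dM using s eAB by (auto simp: A1_def B1_def dg_def)
    have in2: "(A2,B2) \<in> decomp N" unfolding dN using s eAB by (auto simp: A2_def B2_def dg_def)
    have off: "A!i!j = dg k1 l1 A1 A2 i j \<and> B!i!j = dg k1 l1 B1 B2 i j" if "i < k1+k2" "j < l1+l2" for i j
      using eAB[rule_format, OF that] that
      by (cases "i < k1"; cases "j < l1") (simp_all add: dg_def A1_def A2_def B1_def B2_def)
    have "diag A1 A2 = A"
      by (rule mk_eq[OF shape_diag[OF s(1) n(1) s(3) n(3)] sA])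
        (simp add: diag_nth[OF s(1) n(1) s(3) n(3)] off)
    moreover have "diag B1 B2 = B"
      by (rule mk_eq[OF shape_diag[OF s(2) n(2) s(4) n(4)] sB])
        (simp add: diag_nth[OF s(2) n(2) s(4) n(4)] off)
    ultimately show "\<exists>z\<in>decomp M \<times> decomp N. w = Phi z"
      using in1 in2 by (intro bexI[of _ "((A1,B1),(A2,B2))"]) (auto simp: ww Phi_def)
  qed
qed

lemma cop_diag:
  assumes pM: "packed M" and pN: "packed N"
  shows "cop_basis (diag M N) w = (\<Sum>z1\<in>decomp M. \<Sum>z2\<in>decomp N.
    if (diag (pk (fst z1)) (pk (fst z2)), diag (pk (snd z1)) (pk (snd z2))) = w then 1 else 0)"
proof -
  have "cop_basis (diag M N) w = (\<Sum>z\<in>decomp M \<times> decomp N.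
      if (pk (fst (Phi z)), pk (snd (Phi z))) = w then 1 else 0)"
    unfolding cop_sum by (rule sum.reindex_bij_betw[OF decomp_diag[OF pM pN], symmetric])
  also have "\<dots> = (\<Sum>z1\<in>decomp M. \<Sum>z2\<in>decomp N.
    if (diag (pk (fst z1)) (pk (fst z2)), diag (pk (snd z1)) (pk (snd z2))) = w then 1 else 0)"
    unfolding sum_prod
  proof (intro sum.cong refl)
    fix z1 z2 assume z1: "z1 \<in> decomp M" and z2: "z2 \<in> decomp N"
    have s: "shape (nrows M) (ncols M) (fst z1)" "shape (nrows M) (ncols M) (snd z1)"
      "shape (nrows N) (ncols N) (fst z2)" "shape (nrows N) (ncols N) (snd z2)"
      using z1 z2 decomp_char[of "fst z1" "snd z1" M] decomp_char[of "fst z2" "snd z2" N] by auto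
    note n = ncols_dec[OF pM s(1)] ncols_dec[OF pM s(2)] ncols_dec[OF pN s(3)] ncols_dec[OF pN s(4)]
    show "(if (pk (fst (Phi (z1, z2))), pk (snd (Phi (z1, z2)))) = w then 1 else 0) =
      (if (diag (pk (fst z1)) (pk (fst z2)), diag (pk (snd z1)) (pk (snd z2))) = w then 1 else (0::rat))"
      by (simp add: Phi_def pk_diag[OF s(1) n(1) s(3) n(3)] pk_diag[OF s(2) n(2) s(4) n(4)])
  qed
  finally show ?thesis .
qed

lemma sum_if_elim:
  fixes c F :: "_ \<Rightarrow> rat"
  assumes "finite S" "\<And>z. z \<in> Z \<Longrightarrow> t z \<in> S"
  shows "(\<Sum>w\<in>S. c w * (\<Sum>z\<in>Z. if t z = w then F z else 0)) = (\<Sum>z\<in>Z. c (t z) * F z)"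
proof -
  have "(\<Sum>w\<in>S. c w * (\<Sum>z\<in>Z. if t z = w then F z else 0))
      = (\<Sum>w\<in>S. \<Sum>z\<in>Z. if t z = w then c w * F z else 0)"
    by (intro sum.cong refl) (simp add: sum_distrib_left mult_if0 cong: if_cong)
  also have "\<dots> = (\<Sum>z\<in>Z. \<Sum>w\<in>S. if t z = w then c w * F z else 0)"
    by (rule sum.swap)
  also have "\<dots> = (\<Sum>z\<in>Z. c (t z) * F z)"
    using assms by (intro sum.cong refl) (simp add: sum.delta)
  finally show ?thesis .
qed

lemma K_row_append_Pk: "K_row x y (as @ bs) N =
  (\<Sum>N1\<in>Pk (sum_list as). \<Sum>N2\<in>Pk (sum_list bs).
     if diag N1 N2 = N then K_row x y as N1 * K_row x y bs N2 else 0)"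
proof (induction as arbitrary: N)
  case Nil
  have "K_row x y bs N = (\<Sum>N2\<in>Pk (sum_list bs). if N2 = N then K_row x y bs N2 else 0)"
    using finite_Pk K_row_supp[of x y bs N] by (auto simp: sum.delta')
  then show ?case by (simp add: Pk0 K_row_Nil unit_el_def cong: if_cong)
next
  case (Cons a as)
  let ?K = "K_row x y"
  let ?Z = "Pk (sum_list as) \<times> Pk (sum_list bs)"
  have fZ: "finite ?Z" by (simp add: finite_Pk)
  have inZ: "diag (fst z) (snd z) \<in> Pk (sum_list (as @ bs))" if "z \<in> ?Z" for z
    using that by (auto simp: Pk_def packed_diag weight_diag)
  have "?K ((a#as) @ bs) N = (\<Sum>M\<in>Pk a. \<Sum>N'\<in>Pk (sum_list (as@bs)).
      (if diag M N' = N then hh x y M else 0) * ?K (as@bs) N')"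
    unfolding append_Cons K_row_Cons2 by (intro sum.cong refl) simp
  also have "\<dots> = (\<Sum>M\<in>Pk a. \<Sum>N'\<in>Pk (sum_list (as@bs)).
      (if diag M N' = N then hh x y M else 0) *
        (\<Sum>z\<in>?Z. if diag (fst z) (snd z) = N' then ?K as (fst z) * ?K bs (snd z) else 0))"
    unfolding Cons.IH by (simp add: sum.cartesian_product split_def)
  also have "\<dots> = (\<Sum>M\<in>Pk a. \<Sum>z\<in>?Z.
      (if diag M (diag (fst z) (snd z)) = N then hh x y M else 0) * (?K as (fst z) * ?K bs (snd z)))"
    by (intro sum.cong refl sum_if_elim[where t = "\<lambda>z. diag (fst z) (snd z)"] finite_Pk inZ)
  finally have L: "?K ((a#as) @ bs) N = \<dots>" .
  have inY: "diag (fst z) (snd z) \<in> Pk (sum_list (a#as))" if "z \<in> Pk a \<times> Pk (sum_list as)" for z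
    using that by (auto simp: Pk_def packed_diag weight_diag)
  have "(\<Sum>N1\<in>Pk (sum_list (a#as)). \<Sum>N2\<in>Pk (sum_list bs).
     if diag N1 N2 = N then ?K (a#as) N1 * ?K bs N2 else 0)
   = (\<Sum>N2\<in>Pk (sum_list bs). \<Sum>N1\<in>Pk (sum_list (a#as)).
     (if diag N1 N2 = N then ?K bs N2 else 0) *
       (\<Sum>z\<in>Pk a \<times> Pk (sum_list as). if diag (fst z) (snd z) = N1 then hh x y (fst z) * ?K as (snd z) else 0))"
    by (subst sum.swap) (intro sum.cong refl, simp add: K_row_Cons2 sum.cartesian_product split_def if_distrib cong: if_cong)
  also have "\<dots> = (\<Sum>N2\<in>Pk (sum_list bs). \<Sum>z\<in>Pk a \<times> Pk (sum_list as).
     (if diag (diag (fst z) (snd z)) N2 = N then ?K bs N2 else 0) * (hh x y (fst z) * ?K as (snd z)))"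
    by (intro sum.cong refl sum_if_elim[where t = "\<lambda>z. diag (fst z) (snd z)"] finite_Pk inY)
  also have "\<dots> = (\<Sum>N2\<in>Pk (sum_list bs). \<Sum>M\<in>Pk a. \<Sum>N1\<in>Pk (sum_list as).
      (if diag M (diag N1 N2) = N then hh x y M * (?K as N1 * ?K bs N2) else 0))"
    by (simp only: sum_prod fst_conv snd_conv diag_assoc) (intro sum.cong refl, simp)
  also have "\<dots> = (\<Sum>M\<in>Pk a. \<Sum>N2\<in>Pk (sum_list bs). \<Sum>N1\<in>Pk (sum_list as).
      (if diag M (diag N1 N2) = N then hh x y M * (?K as N1 * ?K bs N2) else 0))"
    by (rule sum.swap)
  also have "\<dots> = (\<Sum>M\<in>Pk a. \<Sum>N1\<in>Pk (sum_list as). \<Sum>N2\<in>Pk (sum_list bs).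
      (if diag M (diag N1 N2) = N then hh x y M * (?K as N1 * ?K bs N2) else 0))"
    by (rule sum.cong[OF refl], rule sum.swap)
  also have "\<dots> = (\<Sum>M\<in>Pk a. \<Sum>z\<in>?Z.
      (if diag M (diag (fst z) (snd z)) = N then hh x y M else 0) * (?K as (fst z) * ?K bs (snd z)))"
    by (simp only: sum_prod fst_conv snd_conv) (intro sum.cong refl, simp)
  finally show ?case using L by simp
qed


definition rw :: "mat \<Rightarrow> nat list" where
  "rw M = (if M = [] then [] else hd M)"

definition Spl :: "nat list \<Rightarrow> (nat list \<times> nat list) set" where
  "Spl as = {(bs,cs). length bs = length as \<and> length cs = length as \<and> (\<forall>i<length as. bs!i + cs!i = as!i)}"

lemma K_basis_rw: "K_basis x y M = K_row x y (rw M)"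
  by (simp add: K_basis_def rw_def K_row_Nil)

lemma K_row_zero: "N \<notin> Pk (sum_list as) \<Longrightarrow> K_row x y as N = 0"
  using K_row_supp by blast

lemma K_row_append_gen:
  assumes "finite T1" "finite T2" "Pk (sum_list as) \<subseteq> T1" "Pk (sum_list bs) \<subseteq> T2"
  shows "K_row x y (as @ bs) N =
  (\<Sum>N1\<in>T1. \<Sum>N2\<in>T2. if diag N1 N2 = N then K_row x y as N1 * K_row x y bs N2 else 0)"
proof -
  have inner: "(\<Sum>N2\<in>Pk (sum_list bs). if diag N1 N2 = N then K_row x y as N1 * K_row x y bs N2 else 0)
      = (\<Sum>N2\<in>T2. if diag N1 N2 = N then K_row x y as N1 * K_row x y bs N2 else 0)" for N1
    by (rule sum.mono_neutral_left[OF assms(2,4)]) (use K_row_supp[of x y bs] in fastforce)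
  have "K_row x y (as @ bs) N =
    (\<Sum>N1\<in>Pk (sum_list as). \<Sum>N2\<in>T2. if diag N1 N2 = N then K_row x y as N1 * K_row x y bs N2 else 0)"
    unfolding K_row_append_Pk inner ..
  also have "\<dots> = (\<Sum>N1\<in>T1. \<Sum>N2\<in>T2. if diag N1 N2 = N then K_row x y as N1 * K_row x y bs N2 else 0)"
    by (rule sum.mono_neutral_left[OF assms(1,3)]) (simp add: K_row_zero cong: if_cong)
  finally show ?thesis .
qed

lemma lin_sum: "finite S \<Longrightarrow> supp f \<subseteq> S \<Longrightarrow> lin g f N = (\<Sum>M\<in>S. f M * g M N)"
  unfolding lin_def by (rule sum.mono_neutral_left) (auto simp: supp_def)

lemma bilin_sum: "finite S1 \<Longrightarrow> finite S2 \<Longrightarrow> supp f \<subseteq> S1 \<Longrightarrow> supp g \<subseteq> S2 \<Longrightarrow>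
   bilin m f g N = (\<Sum>M1\<in>S1. \<Sum>M2\<in>S2. if m M1 M2 = N then f M1 * g M2 else 0)"
proof -
  assume a: "finite S1" "finite S2" "supp f \<subseteq> S1" "supp g \<subseteq> S2"
  have i: "(\<Sum>M2\<in>supp g. if m M1 M2 = N then f M1 * g M2 else 0)
     = (\<Sum>M2\<in>S2. if m M1 M2 = N then f M1 * g M2 else 0)" for M1
    by (rule sum.mono_neutral_left[OF a(2,4)]) (auto simp: supp_def)
  show ?thesis unfolding bilin_def i
    by (rule sum.mono_neutral_left[OF a(1,3)]) (simp add: supp_def cong: if_cong)
qed

definition D :: "nat \<Rightarrow> (nat \<times> nat) set" where
  "D a = {(b,c). b + c = a}"

lemma finite_D: "finite (D a)"
  by (rule finite_subset[of _ "{..a} \<times> {..a}"]) (auto simp: D_def)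

lemma Spl_Nil: "Spl [] = {([],[])}"
  by (auto simp: Spl_def)

definition cc :: "(nat \<times> nat) \<times> (nat list \<times> nat list) \<Rightarrow> nat list \<times> nat list" where
  "cc w = (fst (fst w) # fst (snd w), snd (fst w) # snd (snd w))"

lemma Spl_Cons: "Spl (a#as) = cc ` (D a \<times> Spl as)"
proof (intro set_eqI iffI)
  fix z assume "z \<in> Spl (a#as)"
  then obtain bs cs where z: "z = (bs,cs)" and l: "length bs = Suc (length as)" "length cs = Suc (length as)"
    and e: "\<forall>i<Suc (length as). bs!i + cs!i = (a#as)!i" by (auto simp: Spl_def)
  obtain b bs' where bs: "bs = b#bs'" using l by (cases bs) auto
  obtain c cs' where cs: "cs = c#cs'" using l by (cases cs) auto
  have "(b,c) \<in> D a" using e[rule_format, of 0] by (simp add: D_def bs cs)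
  moreover have "(bs',cs') \<in> Spl as" using l e by (auto simp: Spl_def bs cs)
  moreover have "z = cc ((b,c),(bs',cs'))" by (simp add: z bs cs cc_def)
  ultimately show "z \<in> cc ` (D a \<times> Spl as)" by blast
next
  fix z assume "z \<in> cc ` (D a \<times> Spl as)"
  then show "z \<in> Spl (a#as)"
    by (auto simp: cc_def D_def Spl_def nth_Cons split: nat.splits)
qed

lemma inj_cc: "inj_on cc X"
  by (auto simp: inj_on_def cc_def)

lemma finite_Spl: "finite (Spl as)"
  by (induction as) (auto simp: Spl_Nil Spl_Cons finite_D)

lemma Spl_sum: "z \<in> Spl as \<Longrightarrow> sum_list (fst z) + sum_list (snd z) = sum_list as"
proof (induction as arbitrary: z)
  case Nil then show ?case by (simp add: Spl_Nil)
next
  case (Cons a as)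
  then obtain u v where "z = cc (u,v)" "u \<in> D a" "v \<in> Spl as" by (auto simp: Spl_Cons)
  then show ?case using Cons.IH[of v] by (auto simp: cc_def D_def)
qed

lemma decomp_Nil: "decomp [] = {([],[])}"
  by (auto simp: decomp_def)

definition VV :: "nat \<Rightarrow> mat set" where
  "VV W = {X. packed X \<and> weight X \<le> W}"

lemma finite_VV: "finite (VV W)"
  unfolding VV_def by (rule finite_packed_le)

lemma weight_decomp:
  assumes "packed M" "(A,B) \<in> decomp M"
  shows "weight A + weight B = weight M"
proof -
  have s: "shape (nrows M) (ncols M) A" "shape (nrows M) (ncols M) B"
    and e: "\<forall>i<nrows M. \<forall>j<ncols M. A!i!j + B!i!j = M!i!j"
    using assms(2) decomp_char by auto
  show ?thesis
    unfolding weight_shape[OF s(1)] weight_shape[OF s(2)] weight_shape[OF packed_shape[OF assms(1)]]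
    using e by (simp add: sum.distrib[symmetric])
qed

lemma pk_VV:
  assumes "packed M" "weight M \<le> W" "z \<in> decomp M"
  shows "pk (fst z) \<in> VV W \<and> pk (snd z) \<in> VV W"
proof -
  have s: "shape (nrows M) (ncols M) (fst z)" "shape (nrows M) (ncols M) (snd z)"
    using assms(3) decomp_char[of "fst z" "snd z" M] by auto
  have w: "weight (fst z) + weight (snd z) = weight M"
    using weight_decomp[OF assms(1), of "fst z" "snd z"] assms(3) by simp
  show ?thesis using s w assms(2)
    by (auto simp: VV_def packed_pk weight_pk shape_rect)
qed

definition cq :: "mat \<Rightarrow> mat \<Rightarrow> (mat \<times> mat) \<times> (mat \<times> mat) \<Rightarrow> rat" where
  "cq P Q q = (if diag (fst (fst q)) (fst (snd q)) = P \<and> diag (snd (fst q)) (snd (snd q)) = Q then 1 else 0)"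

lemma copdiag2:
  assumes pM: "packed M" and pN: "packed N" and wM: "weight M \<le> W" and wN: "weight N \<le> W"
  shows "cop_basis (diag M N) (P,Q) = (\<Sum>q\<in>(VV W \<times> VV W) \<times> (VV W \<times> VV W).
     cq P Q q * (cop_basis M (fst q) * cop_basis N (snd q)))"
proof -
  let ?V4 = "(VV W \<times> VV W) \<times> (VV W \<times> VV W)"
  let ?pp = "\<lambda>z::mat\<times>mat. (pk (fst z), pk (snd z))"
  let ?t = "\<lambda>z::(mat\<times>mat)\<times>(mat\<times>mat). (?pp (fst z), ?pp (snd z))"
  have prod: "cop_basis M (fst q) * cop_basis N (snd q) = (\<Sum>z\<in>decomp M \<times> decomp N. if ?t z = q then 1 else 0)" for q
    unfolding cop_sum sum_product sum_prod
    by (intro sum.cong refl) (auto simp: prod_eq_iff)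
  have "(\<Sum>q\<in>?V4. cq P Q q * (cop_basis M (fst q) * cop_basis N (snd q)))
      = (\<Sum>z\<in>decomp M \<times> decomp N. cq P Q (?t z) * 1)"
    unfolding prod
    by (rule sum_if_elim) (use pk_VV[OF pM wM] pk_VV[OF pN wN] in \<open>auto simp: finite_VV\<close>)
  also have "\<dots> = cop_basis (diag M N) (P,Q)"
    unfolding cop_diag[OF pM pN] sum_prod by (intro sum.cong refl) (simp add: cq_def)
  finally show ?thesis ..
qed


lemma sum_product_prod: "(\<Sum>p\<in>A. f p) * (\<Sum>p'\<in>B. g p') = (\<Sum>r\<in>A \<times> B. (f (fst r) * g (snd r)::rat))"
  by (simp add: sum_product sum.cartesian_product split_def)


lemma hilb_gchoose: "hilb n X = X gchoose n"
  by (simp add: hilb_def gbinomial_prod_rev atLeast0LessThan)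

lemma ID: "(\<Sum>k\<le>p+q. hilb k X * of_nat ((k choose p) * (p choose (p+q-k)))) = hilb p X * hilb q X"
proof -
  define f where "f k = hilb k X * of_nat ((k choose p) * (p choose (p+q-k)))" for k
  have "hilb p X * hilb q X = (X gchoose p) * (\<Sum>m\<in>{0..q}. (of_nat p gchoose m) * ((X - of_nat p) gchoose (q - m)))"
    using gbinomial_Vandermonde[of "of_nat p" "X - of_nat p" q] by (simp add: hilb_gchoose)
  also have "\<dots> = (\<Sum>m\<in>{0..q}. of_nat (p choose m) * ((X gchoose p) * ((X - of_nat p) gchoose (q - m))))"
    by (simp add: sum_distrib_left binomial_gbinomial mult_ac)
  also have "\<dots> = (\<Sum>m\<in>{0..q}. of_nat (p choose m) * ((X gchoose (p+q-m)) * (of_nat (p+q-m) gchoose p)))"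
  proof (intro sum.cong refl)
    fix m assume "m \<in> {0..q}"
    then have "p \<le> p + q - m" "p + q - m - p = q - m" by auto
    then show "of_nat (p choose m) * ((X gchoose p) * ((X - of_nat p) gchoose (q - m))) =
        of_nat (p choose m) * ((X gchoose (p+q-m)) * (of_nat (p+q-m) gchoose p))"
      using gbinomial_trinomial_revision[of p "p+q-m" X] by simp
  qed
  also have "\<dots> = (\<Sum>m\<in>{0..q}. f (p + q - m))"
  proof (intro sum.cong refl)
    fix m assume "m \<in> {0..q}"
    then have e: "p + q - (p + q - m) = m" by simp
    show "of_nat (p choose m) * ((X gchoose (p+q-m)) * (of_nat (p+q-m) gchoose p)) = f (p + q - m)"
      unfolding f_def e of_nat_mult binomial_gbinomial hilb_gchoose by (simp only: ac_simps)
  qed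
  also have "\<dots> = (\<Sum>i\<in>{0..q}. f (i + p))"
    by (subst sum.atLeastAtMost_rev) (intro sum.cong refl, simp add: add.commute)
  also have "\<dots> = (\<Sum>k\<in>{0+p..q+p}. f k)"
    by (rule sum.shift_bounds_cl_nat_ivl[symmetric])
  also have "\<dots> = (\<Sum>k\<in>{..<p}. f k) + (\<Sum>k\<in>{p..p+q}. f k)"
  proof -
    have z: "(\<Sum>k\<in>{..<p}. f k) = 0" by (rule sum.neutral) (simp add: f_def binomial_eq_0)
    show ?thesis by (simp only: z add.commute add_0)
  qed
  also have "\<dots> = (\<Sum>k\<in>{..<p} \<union> {p..p+q}. f k)"
    by (rule sum.union_disjoint[symmetric]) auto
  also have "{..<p} \<union> {p..p+q} = {..p+q}" by auto
  finally show ?thesis by (simp add: f_def)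
qed

definition RP :: "nat \<Rightarrow> nat \<Rightarrow> nat \<Rightarrow> (nat set \<times> nat set) set" where
  "RP p q k = {(R1,R2). R1 \<union> R2 = {..<k} \<and> card R1 = p \<and> card R2 = q}"

lemma finite_RP: "finite (RP p q k)"
  by (rule finite_subset[of _ "Pow {..<k} \<times> Pow {..<k}"]) (auto simp: RP_def)

lemma card_RP:
  assumes "k \<le> p + q"
  shows "card (RP p q k) = (k choose p) * (p choose (p+q-k))"
proof -
  let ?S = "{R1. R1 \<subseteq> {..<k} \<and> card R1 = p}"
  let ?B = "\<lambda>R1. {R2. R1 \<union> R2 = {..<k} \<and> card R2 = q}"
  have eq: "RP p q k = Sigma ?S ?B" by (auto simp: RP_def)
  have fS: "finite ?S" by (rule finite_subset[of _ "Pow {..<k}"]) auto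
  have fB: "finite (?B R1)" for R1 by (rule finite_subset[of _ "Pow {..<k}"]) auto
  have cB: "card (?B R1) = p choose (p+q-k)" if R1: "R1 \<in> ?S" for R1
  proof -
    have sub: "R1 \<subseteq> {..<k}" and cR: "card R1 = p" using R1 by auto
    have fin: "finite R1" using sub finite_subset by blast
    have pk: "p \<le> k" using card_mono[OF _ sub] cR by simp
    have cD: "card ({..<k} - R1) = k - p" using card_Diff_subset[OF fin sub] cR by simp
    have "?B R1 = (\<lambda>E. ({..<k} - R1) \<union> E) ` {E. E \<subseteq> R1 \<and> card E = p + q - k}"
    proof (intro set_eqI iffI)
      fix R2 assume "R2 \<in> ?B R1"
      then have u: "R1 \<union> R2 = {..<k}" and c2: "card R2 = q" by auto
      have "R2 = ({..<k} - R1) \<union> (R2 \<inter> R1)" using u by auto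
      moreover have "card (R2 \<inter> R1) = p + q - k"
      proof -
        have "card R2 = card ({..<k} - R1) + card (R2 \<inter> R1)"
          by (subst \<open>R2 = _\<close>, rule card_Un_disjoint) (use fin in auto)
        then show ?thesis using c2 cD assms pk by simp
      qed
      ultimately show "R2 \<in> (\<lambda>E. ({..<k} - R1) \<union> E) ` {E. E \<subseteq> R1 \<and> card E = p + q - k}" by blast
    next
      fix R2 assume "R2 \<in> (\<lambda>E. ({..<k} - R1) \<union> E) ` {E. E \<subseteq> R1 \<and> card E = p + q - k}"
      then obtain E where E: "E \<subseteq> R1" "card E = p + q - k" "R2 = ({..<k} - R1) \<union> E" by blast
      have "card R2 = card ({..<k} - R1) + card E"
        unfolding E(3) by (rule card_Un_disjoint) (use E(1) fin finite_subset in auto)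
      then have "card R2 = q" using cD E(2) assms pk by simp
      moreover have "R1 \<union> R2 = {..<k}" using E sub by auto
      ultimately show "R2 \<in> ?B R1" by simp
    qed
    moreover have "inj_on (\<lambda>E. ({..<k} - R1) \<union> E) {E. E \<subseteq> R1 \<and> card E = p + q - k}"
      by (rule inj_onI) (use sub in blast)
    ultimately have "card (?B R1) = card {E. E \<subseteq> R1 \<and> card E = p + q - k}"
      by (simp add: card_image)
    also have "\<dots> = p choose (p+q-k)" using n_subsets[OF fin] cR by simp
    finally show ?thesis .
  qed
  have "card (RP p q k) = (\<Sum>R1\<in>?S. card (?B R1))"
    unfolding eq using fS fB by simp
  also have "\<dots> = card ?S * (p choose (p+q-k))" using cB by simp
  also have "card ?S = k choose p" using n_subsets[of "{..<k}" p] by simp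
  finally show ?thesis .
qed

lemma ID2: "(\<Sum>k\<le>p+q. hilb k X * of_nat (card (RP p q k))) = hilb p X * hilb q X"
  using ID[where p=p and q=q and X=X] by (simp add: card_RP)

lemma fl_props:
  assumes "R \<subseteq> {..<k}"
  shows "set (filter (\<lambda>i. i \<in> R) [0..<k]) = R" "distinct (filter (\<lambda>i. i \<in> R) [0..<k])"
    "length (filter (\<lambda>i. i \<in> R) [0..<k]) = card R"
proof -
  show s: "set (filter (\<lambda>i. i \<in> R) [0..<k]) = R" using assms by auto
  show d: "distinct (filter (\<lambda>i. i \<in> R) [0..<k])" by simp
  show "length (filter (\<lambda>i. i \<in> R) [0..<k]) = card R" using distinct_card[OF d] s by simp
qed

lemma packed_rows: "packed P \<Longrightarrow> r < nrows P \<Longrightarrow> \<exists>c<ncols P. P!r!c \<noteq> 0"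
  unfolding packed_def nrows_def by (metis in_set_conv_nth nth_mem)

lemma packed_cols: "packed P \<Longrightarrow> c < ncols P \<Longrightarrow> \<exists>r<nrows P. P!r!c \<noteq> 0"
  unfolding packed_def nrows_def by (metis in_set_conv_nth)

definition emb :: "mat \<Rightarrow> nat set \<Rightarrow> nat set \<Rightarrow> nat \<Rightarrow> nat \<Rightarrow> mat" where
  "emb P R C k l = mk k l (\<lambda>i j. if i \<in> R \<and> j \<in> C then
      P ! pos (filter (\<lambda>i. i \<in> R) [0..<k]) i ! pos (filter (\<lambda>j. j \<in> C) [0..<l]) j else 0)"

lemma emb_props:
  assumes P: "packed P" and R: "R \<subseteq> {..<k}" "card R = nrows P"
    and C: "C \<subseteq> {..<l}" "card C = ncols P" and kl: "k = 0 \<Longrightarrow> l = 0"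
  shows "nzr (emb P R C k l) = R \<and> nzc (emb P R C k l) = C \<and> pk (emb P R C k l) = P
    \<and> shape k l (emb P R C k l) \<and> ncols (emb P R C k l) = l"
proof -
  define rs where "rs = filter (\<lambda>i. i \<in> R) [0..<k]"
  define cs where "cs = filter (\<lambda>j. j \<in> C) [0..<l]"
  define E where "E = emb P R C k l"
  have rs: "set rs = R" "distinct rs" "length rs = nrows P" using fl_props[OF R(1)] R(2) by (auto simp: rs_def)
  have cs: "set cs = C" "distinct cs" "length cs = ncols P" using fl_props[OF C(1)] C(2) by (auto simp: cs_def)
  have Eij: "E!i!j = (if i \<in> R \<and> j \<in> C then P!(pos rs i)!(pos cs j) else 0)" if "i < k" "j < l" for i j
    using that by (simp add: E_def emb_def rs_def cs_def)
  have sE: "shape k l E" by (simp add: E_def emb_def shape_mk)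
  have nE: "ncols E = l" using kl by (simp add: E_def emb_def ncols_mk)
  have lE: "length E = k" by (simp add: E_def emb_def)
  have nzr: "nzr E = R"
  proof (intro set_eqI iffI)
    fix i assume "i \<in> nzr E"
    then obtain j where "i < k" "j < l" "E!i!j \<noteq> 0" by (auto simp: nzr_def lE nE)
    then show "i \<in> R" using Eij by (auto split: if_splits)
  next
    fix i assume i: "i \<in> R"
    then have ik: "i < k" using R by auto
    have r: "pos rs i < nrows P" "rs ! pos rs i = i" using nth_pos[OF rs(2), of i] i rs by auto
    obtain c where c: "c < ncols P" "P!(pos rs i)!c \<noteq> 0" using packed_rows[OF P r(1)] by blast
    have j: "cs!c \<in> C" "cs!c < l" "pos cs (cs!c) = c" using c(1) cs C(1) nth_mem pos_nth by auto
    have "E!i!(cs!c) \<noteq> 0" using Eij[OF ik j(2)] i j c by simp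
    then show "i \<in> nzr E" using ik j by (auto simp: nzr_def lE nE)
  qed
  have nzc: "nzc E = C"
  proof (intro set_eqI iffI)
    fix j assume "j \<in> nzc E"
    then obtain i where "i < k" "j < l" "E!i!j \<noteq> 0" by (auto simp: nzc_def lE nE)
    then show "j \<in> C" using Eij by (auto split: if_splits)
  next
    fix j assume j: "j \<in> C"
    then have jl: "j < l" using C by auto
    have c: "pos cs j < ncols P" "cs ! pos cs j = j" using nth_pos[OF cs(2), of j] j cs by auto
    obtain r where r: "r < nrows P" "P!r!(pos cs j) \<noteq> 0" using packed_cols[OF P c(1)] by blast
    have i: "rs!r \<in> R" "rs!r < k" "pos rs (rs!r) = r" using r(1) rs R(1) nth_mem pos_nth by auto
    have "E!(rs!r)!j \<noteq> 0" using Eij[OF i(2) jl] i j r by simp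
    then show "j \<in> nzc E" using jl i by (auto simp: nzc_def lE nE)
  qed
  have rl: "rl E = rs" by (simp add: rl_def lE nzr rs_def)
  have cl: "cl E = cs" by (simp add: cl_def nE nzc cs_def)
  have rE: "rect E" using sE shape_rect by blast
  have pk: "pk E = P"
  proof (rule nth_equalityI)
    show "length (pk E) = length P" by (simp add: pk_alt[OF rE] rl rs nrows_def)
    fix r assume "r < length (pk E)"
    then have r: "r < length rs" by (simp add: pk_alt[OF rE] rl)
    have rk: "rs!r < k" "rs!r \<in> R" using r rs R(1) nth_mem by auto
    have pr: "pos rs (rs!r) = r" using pos_nth[OF rs(2) r] .
    have lr: "length (P!r) = ncols P" using P r rs by (auto simp: packed_def nrows_def)
    show "pk E ! r = P ! r"
    proof (rule nth_equalityI)
      show "length (pk E ! r) = length (P ! r)" using r lr cs by (simp add: pk_alt[OF rE] rl cl)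
      fix c assume "c < length (pk E ! r)"
      then have c: "c < length cs" using r by (simp add: pk_alt[OF rE] rl cl)
      have cl': "cs!c < l" "cs!c \<in> C" using c cs C(1) nth_mem by auto
      have pc: "pos cs (cs!c) = c" using pos_nth[OF cs(2) c] .
      show "pk E ! r ! c = P ! r ! c"
        using r c Eij[OF rk(1) cl'(1)] rk cl' pr pc by (simp add: pk_alt[OF rE] rl cl)
    qed
  qed
  show ?thesis using nzr nzc pk sE nE by (simp add: E_def)
qed


lemma pk_nth:
  assumes "rect A" "r < length (rl A)" "c < length (cl A)"
  shows "pk A ! r ! c = A ! (rl A ! r) ! (cl A ! c)"
  using assms by (simp add: pk_alt)

lemma recon:
  assumes s: "shape k l A" "ncols A = l" "shape k l A'" "ncols A' = l"
    and e: "nzr A = nzr A'" "nzc A = nzc A'" "pk A = pk A'"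
  shows "A = A'"
proof (rule mk_eq[OF s(1) s(3)])
  fix i j assume i: "i < k" and j: "j < l"
  have lA: "length A = k" "length A' = k" using s by (auto simp: shape_def)
  have rl: "rl A = rl A'" by (simp add: rl_def lA e)
  have cl: "cl A = cl A'" by (simp add: cl_def s e)
  have rA: "rect A" "rect A'" using s shape_rect by blast+
  show "A!i!j = A'!i!j"
  proof (cases "i \<in> nzr A \<and> j \<in> nzc A")
    case True
    define r where "r = pos (rl A) i"
    define c where "c = pos (cl A) j"
    have r: "r < length (rl A)" "rl A ! r = i" using nth_pos[OF distinct_rl, of i A] True by (auto simp: r_def set_rl)
    have c: "c < length (cl A)" "cl A ! c = j" using nth_pos[OF distinct_cl, of j A] True by (auto simp: c_def set_cl)
    have "A!i!j = pk A ! r ! c" using pk_nth[OF rA(1) r(1) c(1)] r c by simp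
    also have "\<dots> = pk A' ! r ! c" using e by simp
    also have "\<dots> = A'!i!j" using pk_nth[OF rA(2), of r c] r c rl cl by simp
    finally show ?thesis .
  next
    case False
    then have "A!i!j = 0" using i j lA s by (auto simp: nzr_def nzc_def)
    moreover have "\<not> (i \<in> nzr A' \<and> j \<in> nzc A')" using False e by simp
    then have "A'!i!j = 0" using i j lA s by (auto simp: nzr_def nzc_def)
    ultimately show ?thesis by simp
  qed
qed

lemma nz_union:
  assumes pM: "packed M" and d: "(A,B) \<in> decomp M"
  shows "nzr A \<union> nzr B = {..<nrows M}" "nzc A \<union> nzc B = {..<ncols M}"
proof -
  have s: "shape (nrows M) (ncols M) A" "shape (nrows M) (ncols M) B"
    and e: "\<forall>i<nrows M. \<forall>j<ncols M. A!i!j + B!i!j = M!i!j"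
    using d decomp_char by auto
  have n: "ncols A = ncols M" "ncols B = ncols M" using ncols_dec[OF pM] s by auto
  have l: "length A = nrows M" "length B = nrows M" using s by (auto simp: shape_def)
  have sM: "shape (nrows M) (ncols M) M" by (rule packed_shape[OF pM])
  show "nzr A \<union> nzr B = {..<nrows M}"
  proof (intro set_eqI iffI)
    fix i assume "i \<in> nzr A \<union> nzr B" then show "i \<in> {..<nrows M}" by (auto simp: nzr_def l)
  next
    fix i assume "i \<in> {..<nrows M}"
    then have i: "i < nrows M" by simp
    then obtain c where c: "c < ncols M" "M!i!c \<noteq> 0" using packed_rows[OF pM] by blast
    then have "A!i!c \<noteq> 0 \<or> B!i!c \<noteq> 0" using e i by (metis add_0)
    then show "i \<in> nzr A \<union> nzr B" using i c by (auto simp: nzr_def l n)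
  qed
  show "nzc A \<union> nzc B = {..<ncols M}"
  proof (intro set_eqI iffI)
    fix j assume "j \<in> nzc A \<union> nzc B" then show "j \<in> {..<ncols M}" by (auto simp: nzc_def n)
  next
    fix j assume "j \<in> {..<ncols M}"
    then have j: "j < ncols M" by simp
    then obtain r where r: "r < nrows M" "M!r!j \<noteq> 0" using packed_cols[OF pM] by blast
    then have "A!r!j \<noteq> 0 \<or> B!r!j \<noteq> 0" using e j by (metis add_0)
    then show "j \<in> nzc A \<union> nzc B" using j r by (auto simp: nzc_def l n)
  qed
qed


lemma T_facts:
  assumes "M \<in> Pk a" "(A,B) \<in> decomp M" "pk A = P" "pk B = Q"
  shows "packed P \<and> packed Q \<and> weight P + weight Q = a"
proof -
  have pM: "packed M" and wM: "weight M = a" using assms(1) by (auto simp: Pk_def)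
  have s: "shape (nrows M) (ncols M) A" "shape (nrows M) (ncols M) B" using assms(2) decomp_char by auto
  have r: "rect A" "rect B" using s shape_rect by blast+
  show ?thesis using packed_pk[OF r(1)] packed_pk[OF r(2)] weight_pk[OF r(1)] weight_pk[OF r(2)]
      weight_decomp[OF pM assms(2)] wM assms(3,4) by simp
qed

definition phi :: "mat \<times> (mat \<times> mat) \<Rightarrow> (nat \<times> nat) \<times> ((nat set \<times> nat set) \<times> (nat set \<times> nat set))" where
  "phi t = ((nrows (fst t), ncols (fst t)), ((nzr (fst (snd t)), nzr (snd (snd t))), (nzc (fst (snd t)), nzc (snd (snd t)))))"

lemma nrows0: "nrows P = 0 \<Longrightarrow> P = []" by (simp add: nrows_def)

lemma single_val:
  "(\<Sum>M\<in>Pk a. hh x y M * cop_basis M (P,Q)) =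
     (if packed P \<and> packed Q \<and> weight P + weight Q = a then hh x y P * hh x y Q else 0)"
proof -
  define T where "T = Sigma (Pk a) (\<lambda>M. {z\<in>decomp M. pk (fst z) = P \<and> pk (snd z) = Q})"
  have L: "(\<Sum>M\<in>Pk a. hh x y M * cop_basis M (P,Q)) = (\<Sum>t\<in>T. hh x y (fst t))"
  proof -
    have "hh x y M * cop_basis M (P,Q) = (\<Sum>z\<in>{z\<in>decomp M. pk (fst z) = P \<and> pk (snd z) = Q}. hh x y M)" for M
    proof -
      have "hh x y M * cop_basis M (P,Q) = (\<Sum>z\<in>decomp M. if pk (fst z) = P \<and> pk (snd z) = Q then hh x y M else 0)"
        by (simp add: cop_sum sum_distrib_left mult_if0 prod_eq_iff cong: if_cong)
      also have "\<dots> = (\<Sum>z\<in>{z\<in>decomp M. pk (fst z) = P \<and> pk (snd z) = Q}. hh x y M)"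
        by (rule sum.inter_filter[OF finite_decomp, symmetric])
      finally show ?thesis .
    qed
    then have "(\<Sum>M\<in>Pk a. hh x y M * cop_basis M (P,Q)) =
        (\<Sum>M\<in>Pk a. \<Sum>z\<in>{z\<in>decomp M. pk (fst z) = P \<and> pk (snd z) = Q}. hh x y M)"
      by (intro sum.cong refl)
    also have "\<dots> = (\<Sum>t\<in>T. hh x y (fst t))"
      unfolding T_def by (subst sum.Sigma) (auto simp: finite_Pk finite_decomp split_def)
    finally show ?thesis .
  qed
  show ?thesis
  proof (cases "packed P \<and> packed Q \<and> weight P + weight Q = a")
    case False
    have "T = {}"
    proof (rule ccontr)
      assume "T \<noteq> {}"
      then obtain t where "t \<in> T" by blast
      then have "fst t \<in> Pk a" "(fst (snd t), snd (snd t)) \<in> decomp (fst t)"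
          "pk (fst (snd t)) = P" "pk (snd (snd t)) = Q" by (auto simp: T_def)
      then show False using T_facts False by blast
    qed
    then have "(\<Sum>M\<in>Pk a. hh x y M * cop_basis M (P,Q)) = 0" using L by simp
    then show ?thesis using False by (simp only: if_False)
  next
    case True
    then have pP: "packed P" and pQ: "packed Q" and wPQ: "weight P + weight Q = a" by auto
    define rp rq cp cq where "rp = nrows P" "rq = nrows Q" "cp = ncols P" "cq = ncols Q"
    define U where "U = Sigma ({..rp+rq} \<times> {..cp+cq}) (\<lambda>kl. RP rp rq (fst kl) \<times> RP cp cq (snd kl))"
    have Tmem: "t \<in> T \<longleftrightarrow> fst t \<in> Pk a \<and> snd t \<in> decomp (fst t) \<and> pk (fst (snd t)) = P \<and> pk (snd (snd t)) = Q" for t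
      unfolding T_def by (cases t) auto
    have bij: "bij_betw phi T U"
    proof (rule bij_betwI')
      fix t t' assume t: "t \<in> T" and t': "t' \<in> T"
      obtain M A B where tt: "t = (M,(A,B))" by (metis prod.collapse)
      obtain M' A' B' where tt': "t' = (M',(A',B'))" by (metis prod.collapse)
      have h: "M \<in> Pk a" "(A,B) \<in> decomp M" "pk A = P" "pk B = Q" using t by (auto simp: Tmem tt)
      have h': "M' \<in> Pk a" "(A',B') \<in> decomp M'" "pk A' = P" "pk B' = Q" using t' by (auto simp: Tmem tt')
      have pM: "packed M" "packed M'" using h h' by (auto simp: Pk_def)
      show "(phi t = phi t') = (t = t')"
      proof
        assume e: "phi t = phi t'"
        then have k: "nrows M' = nrows M" "ncols M' = ncols M" and
          z: "nzr A = nzr A'" "nzr B = nzr B'" "nzc A = nzc A'" "nzc B = nzc B'"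
          by (auto simp: phi_def tt tt')
        have s: "shape (nrows M) (ncols M) A" "shape (nrows M) (ncols M) B"
          and eM: "\<forall>i<nrows M. \<forall>j<ncols M. A!i!j + B!i!j = M!i!j"
          using h(2) decomp_char by auto
        have s': "shape (nrows M) (ncols M) A'" "shape (nrows M) (ncols M) B'"
          and eM': "\<forall>i<nrows M. \<forall>j<ncols M. A'!i!j + B'!i!j = M'!i!j"
          using h'(2) decomp_char k by auto
        have n: "ncols A = ncols M" "ncols B = ncols M" using ncols_dec[OF pM(1)] s by auto
        have n': "ncols A' = ncols M" "ncols B' = ncols M" using ncols_dec[OF pM(2)] s' k by auto
        have A: "A = A'" by (rule recon[OF s(1) n(1) s'(1) n'(1) z(1) z(3)]) (simp add: h h')
        have B: "B = B'" by (rule recon[OF s(2) n(2) s'(2) n'(2) z(2) z(4)]) (simp add: h h')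
        have "M = M'"
          by (rule mk_eq[OF packed_shape[OF pM(1)]]) (use packed_shape[OF pM(2)] k eM eM' A B in auto)
        then show "t = t'" using A B by (simp add: tt tt')
      qed simp
    next
      fix t assume t: "t \<in> T"
      obtain M A B where tt: "t = (M,(A,B))" by (metis prod.collapse)
      have h: "M \<in> Pk a" "(A,B) \<in> decomp M" "pk A = P" "pk B = Q" using t by (auto simp: Tmem tt)
      have pM: "packed M" using h by (auto simp: Pk_def)
      have s: "shape (nrows M) (ncols M) A" "shape (nrows M) (ncols M) B" using h(2) decomp_char by auto
      have r: "rect A" "rect B" using s shape_rect by blast+
      have c: "card (nzr A) = rp" "card (nzr B) = rq" "card (nzc A) = cp" "card (nzc B) = cq"
        using nrows_pk[OF r(1)] nrows_pk[OF r(2)] ncols_pk[OF r(1)] ncols_pk[OF r(2)] h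
        by (auto simp: rp_rq_cp_cq_def)
      note u = nz_union[OF pM h(2)]
      have "nrows M \<le> rp + rq"
        using card_Un_le[of "nzr A" "nzr B"] u(1) c by simp
      moreover have "ncols M \<le> cp + cq"
        using card_Un_le[of "nzc A" "nzc B"] u(2) c by simp
      ultimately show "phi t \<in> U" using u c by (simp add: U_def phi_def tt RP_def)
    next
      fix u assume u: "u \<in> U"
      obtain k l R1 R2 C1 C2 where uu: "u = ((k,l),((R1,R2),(C1,C2)))" by (metis prod.collapse)
      have RU: "R1 \<union> R2 = {..<k}" "card R1 = rp" "card R2 = rq"
        and CU: "C1 \<union> C2 = {..<l}" "card C1 = cp" "card C2 = cq"
        using u by (auto simp: U_def uu RP_def)
      have kl: "l = 0" if "k = 0"
      proof -
        have "R1 = {}" "R2 = {}" using RU that by auto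
        then have "rp = 0" "rq = 0" using RU by auto
        then have "P = []" "Q = []" by (auto simp: rp_rq_cp_cq_def nrows0)
        then have "cp = 0" "cq = 0" by (auto simp: rp_rq_cp_cq_def)
        moreover have "finite C1" "finite C2" using CU by (metis finite_Un finite_lessThan)+
        ultimately have "C1 = {}" "C2 = {}" using CU by auto
        then show ?thesis using CU by auto
      qed
      define A where "A = emb P R1 C1 k l"
      define B where "B = emb Q R2 C2 k l"
      define M where "M = mk k l (\<lambda>i j. A!i!j + B!i!j)"
      have eA: "nzr A = R1 \<and> nzc A = C1 \<and> pk A = P \<and> shape k l A \<and> ncols A = l"
        unfolding A_def by (rule emb_props[OF pP]) (use RU CU kl in \<open>auto simp: rp_rq_cp_cq_def\<close>)
      have eB: "nzr B = R2 \<and> nzc B = C2 \<and> pk B = Q \<and> shape k l B \<and> ncols B = l"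
        unfolding B_def by (rule emb_props[OF pQ]) (use RU CU kl in \<open>auto simp: rp_rq_cp_cq_def\<close>)
      have nM: "nrows M = k" "ncols M = l" using kl by (auto simp: M_def nrows_def ncols_mk)
      have sM: "shape k l M" by (simp add: M_def shape_mk)
      have Mij: "M!i!j = A!i!j + B!i!j" if "i < k" "j < l" for i j using that by (simp add: M_def)
      have lA: "length A = k" "length B = k" using eA eB by (auto simp: shape_def)
      have dec: "(A,B) \<in> decomp M" unfolding decomp_char nM using eA eB Mij by auto
      have pM: "packed M"
      proof -
        have 1: "\<forall>r\<in>set M. length r = ncols M" using sM nM by (simp add: shape_def)
        have 2: "\<forall>r\<in>set M. \<exists>a\<in>set r. a \<noteq> 0"
        proof
          fix r assume "r \<in> set M"
          then obtain i where i: "i < k" "r = M!i" using sM by (auto simp: in_set_conv_nth shape_def)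
          then have "i \<in> nzr A \<union> nzr B" using RU eA eB by auto
          then obtain j where j: "j < l" "A!i!j \<noteq> 0 \<or> B!i!j \<noteq> 0" by (auto simp: nzr_def eA eB)
          then have "M!i!j \<noteq> 0" using Mij i by auto
          moreover have "M!i!j \<in> set r" using i j sM by (auto simp: shape_def)
          ultimately show "\<exists>a\<in>set r. a \<noteq> 0" by blast
        qed
        have 3: "\<exists>r\<in>set M. r ! j \<noteq> 0" if "j < ncols M" for j
        proof -
          have "j \<in> nzc A \<union> nzc B" using CU eA eB that nM by auto
          then obtain i where i: "i < k" "A!i!j \<noteq> 0 \<or> B!i!j \<noteq> 0" by (auto simp: nzc_def lA)
          then have "M!i!j \<noteq> 0" using Mij that nM by auto
          moreover have "M!i \<in> set M" using i sM by (auto simp: shape_def)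
          ultimately show ?thesis by blast
        qed
        show ?thesis using 1 2 3 by (simp add: packed_def)
      qed
      have rA: "rect A" "rect B" using eA eB shape_rect by blast+
      have "weight M = a"
        using weight_decomp[OF pM dec] weight_pk[OF rA(1)] weight_pk[OF rA(2)] eA eB wPQ by simp
      then have "(M,(A,B)) \<in> T" using pM dec eA eB by (simp add: T_def Pk_def)
      moreover have "u = phi (M,(A,B))" using eA eB nM by (simp add: uu phi_def)
      ultimately show "\<exists>t\<in>T. u = phi t" by blast
    qed
    define g where "g u = hilb (fst (fst u)) x * hilb (snd (fst u)) y" for u :: "(nat \<times> nat) \<times> ((nat set \<times> nat set) \<times> (nat set \<times> nat set))"
    have "(\<Sum>t\<in>T. hh x y (fst t)) = (\<Sum>t\<in>T. g (phi t))"
      by (simp add: g_def phi_def hh_def)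
    also have "\<dots> = (\<Sum>u\<in>U. g u)" by (rule sum.reindex_bij_betw[OF bij])
    also have "\<dots> = (\<Sum>kl\<in>{..rp+rq} \<times> {..cp+cq}. \<Sum>w\<in>RP rp rq (fst kl) \<times> RP cp cq (snd kl). g (kl,w))"
      unfolding U_def by (subst sum.Sigma) (auto simp: finite_RP split_def)
    also have "\<dots> = (\<Sum>kl\<in>{..rp+rq} \<times> {..cp+cq}. (hilb (fst kl) x * of_nat (card (RP rp rq (fst kl)))) *
         (hilb (snd kl) y * of_nat (card (RP cp cq (snd kl)))))"
      by (intro sum.cong refl) (simp add: g_def card_cartesian_product)
    also have "\<dots> = (\<Sum>k\<le>rp+rq. hilb k x * of_nat (card (RP rp rq k))) * (\<Sum>l\<le>cp+cq. hilb l y * of_nat (card (RP cp cq l)))"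
      by (simp add: sum_product_prod)
    also have "\<dots> = hh x y P * hh x y Q"
      by (simp add: ID2 hh_def rp_rq_cp_cq_def)
    finally show ?thesis using L True by simp
  qed
qed

lemma K_row_single: "K_row x y [b] P = (if P \<in> Pk b then hh x y P else 0)"
proof -
  have "K_row x y [b] P = (\<Sum>M\<in>Pk b. if M = P then hh x y M else 0)"
    unfolding K_row_Cons2 by (simp add: Pk0 K_row_Nil unit_el_def cong: if_cong)
  then show ?thesis by (simp add: sum.delta[OF finite_Pk])
qed

lemma single: "(\<Sum>M\<in>Pk a. hh x y M * cop_basis M w)
   = (\<Sum>z\<in>D a. K_row x y [fst z] (fst w) * K_row x y [snd z] (snd w))"
proof -
  obtain P Q where w: "w = (P,Q)" by (cases w)
  have "(\<Sum>z\<in>D a. K_row x y [fst z] P * K_row x y [snd z] Q)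
      = (\<Sum>z\<in>D a. if z = (weight P, weight Q) then (if packed P \<and> packed Q then hh x y P * hh x y Q else 0) else 0)"
    by (intro sum.cong refl) (auto simp: K_row_single Pk_def)
  also have "\<dots> = (if packed P \<and> packed Q \<and> weight P + weight Q = a then hh x y P * hh x y Q else 0)"
    unfolding sum.delta[OF finite_D] by (auto simp: D_def)
  finally show ?thesis using single_val[where a=a and x=x and y=y and P=P and Q=Q] w by simp
qed

lemma K_row_Cons_V:
  assumes "b \<le> W" "sum_list bs \<le> W"
  shows "K_row x y (b#bs) P = (\<Sum>p\<in>VV W \<times> VV W.
     if diag (fst p) (snd p) = P then K_row x y [b] (fst p) * K_row x y bs (snd p) else 0)"
proof -
  have "K_row x y ([b] @ bs) P = (\<Sum>N1\<in>VV W. \<Sum>N2\<in>VV W.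
     if diag N1 N2 = P then K_row x y [b] N1 * K_row x y bs N2 else 0)"
    by (rule K_row_append_gen[OF finite_VV finite_VV]) (use assms in \<open>auto simp: VV_def Pk_def\<close>)
  then show ?thesis by (simp add: sum_prod cong: if_cong)
qed

definition sw :: "(mat \<times> mat) \<times> (mat \<times> mat) \<Rightarrow> (mat \<times> mat) \<times> (mat \<times> mat)" where
  "sw q = ((fst (fst q), fst (snd q)), (snd (fst q), snd (snd q)))"

lemma sw_sw[simp]: "sw (sw q) = q" by (simp add: sw_def)

lemma sum_sw: "(\<Sum>q\<in>(V \<times> V) \<times> (V \<times> V). g (sw q)) = (\<Sum>q\<in>(V \<times> V) \<times> (V \<times> V). g q)"
proof (rule sum.reindex_bij_betw)
  show "bij_betw sw ((V \<times> V) \<times> (V \<times> V)) ((V \<times> V) \<times> (V \<times> V))"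
    by (rule bij_betwI[where g = sw]) (auto simp: sw_def)
qed

lemma prodK:
  assumes "b \<le> W" "sum_list bs \<le> W" "c \<le> W" "sum_list cs \<le> W"
  shows "K_row x y (b#bs) P * K_row x y (c#cs) Q = (\<Sum>q\<in>(VV W \<times> VV W) \<times> (VV W \<times> VV W).
     cq P Q q * ((K_row x y [b] (fst (fst q)) * K_row x y [c] (snd (fst q))) *
                 (K_row x y bs (fst (snd q)) * K_row x y cs (snd (snd q)))))"
proof -
  let ?V = "VV W"
  let ?G = "\<lambda>r::(mat\<times>mat)\<times>(mat\<times>mat). (if diag (fst (fst r)) (snd (fst r)) = P then K_row x y [b] (fst (fst r)) * K_row x y bs (snd (fst r)) else 0) *
     (if diag (fst (snd r)) (snd (snd r)) = Q then K_row x y [c] (fst (snd r)) * K_row x y cs (snd (snd r)) else 0)"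
  have "K_row x y (b#bs) P * K_row x y (c#cs) Q = (\<Sum>r\<in>(?V \<times> ?V) \<times> (?V \<times> ?V). ?G r)"
    unfolding K_row_Cons_V[OF assms(1,2)] K_row_Cons_V[OF assms(3,4)] sum_product_prod ..
  also have "\<dots> = (\<Sum>q\<in>(?V \<times> ?V) \<times> (?V \<times> ?V). ?G (sw q))"
    by (rule sum_sw[symmetric])
  also have "\<dots> = (\<Sum>q\<in>(?V \<times> ?V) \<times> (?V \<times> ?V).
     cq P Q q * ((K_row x y [b] (fst (fst q)) * K_row x y [c] (snd (fst q))) *
                 (K_row x y bs (fst (snd q)) * K_row x y cs (snd (snd q)))))"
    by (intro sum.cong refl) (simp add: sw_def cq_def)
  finally show ?thesis .
qed

lemma core_cop: "(\<Sum>N\<in>Pk (sum_list as). K_row x y as N * cop_basis N (P,Q))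
   = (\<Sum>z\<in>Spl as. K_row x y (fst z) P * K_row x y (snd z) Q)"
proof (induction as arbitrary: P Q)
  case Nil
  have "cop_basis [] (P,Q) = (if ([],[]) = (P,Q) then 1 else 0)"
    by (simp add: cop_sum decomp_Nil pk_def)
  then show ?case by (simp add: Pk0 K_row_Nil unit_el_def Spl_Nil)
next
  case (Cons a as)
  define W where "W = a + sum_list as"
  let ?V4 = "(VV W \<times> VV W) \<times> (VV W \<times> VV W)"
  let ?Z = "Pk a \<times> Pk (sum_list as)"
  let ?K = "K_row x y"
  have fZ: "finite ?Z" by (simp add: finite_Pk)
  have zw: "weight (fst z) \<le> W" "weight (snd z) \<le> W" "packed (fst z)" "packed (snd z)" if "z \<in> ?Z" for z
    using that by (auto simp: W_def Pk_def)
  have "(\<Sum>N\<in>Pk (sum_list (a#as)). ?K (a#as) N * cop_basis N (P,Q))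
     = (\<Sum>N\<in>Pk (sum_list (a#as)). cop_basis N (P,Q) *
          (\<Sum>z\<in>?Z. if diag (fst z) (snd z) = N then hh x y (fst z) * ?K as (snd z) else 0))"
    by (intro sum.cong refl) (simp add: K_row_Cons2 sum_prod mult.commute cong: if_cong)
  also have "\<dots> = (\<Sum>z\<in>?Z. cop_basis (diag (fst z) (snd z)) (P,Q) * (hh x y (fst z) * ?K as (snd z)))"
    by (rule sum_if_elim[OF finite_Pk]) (auto simp: Pk_def packed_diag weight_diag)
  also have "\<dots> = (\<Sum>z\<in>?Z. (\<Sum>q\<in>?V4. cq P Q q * (cop_basis (fst z) (fst q) * cop_basis (snd z) (snd q)))
       * (hh x y (fst z) * ?K as (snd z)))"
    by (intro sum.cong refl) (simp add: copdiag2[OF zw(3,4,1,2)])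
  also have "\<dots> = (\<Sum>z\<in>?Z. \<Sum>q\<in>?V4. cq P Q q * ((hh x y (fst z) * cop_basis (fst z) (fst q)) *
        (?K as (snd z) * cop_basis (snd z) (snd q))))"
    by (rule sum.cong[OF refl], simp only: sum_distrib_right, rule sum.cong[OF refl], simp add: mult_ac)
  also have "\<dots> = (\<Sum>q\<in>?V4. \<Sum>z\<in>?Z. cq P Q q * ((hh x y (fst z) * cop_basis (fst z) (fst q)) *
        (?K as (snd z) * cop_basis (snd z) (snd q))))"
    by (rule sum.swap)
  also have "\<dots> = (\<Sum>q\<in>?V4. cq P Q q * ((\<Sum>M\<in>Pk a. hh x y M * cop_basis M (fst q)) *
        (\<Sum>N\<in>Pk (sum_list as). ?K as N * cop_basis N (snd q))))"
    by (intro sum.cong refl) (subst sum_product_prod, subst sum_distrib_left, rule refl)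
  also have "\<dots> = (\<Sum>q\<in>?V4. cq P Q q * ((\<Sum>u\<in>D a. ?K [fst u] (fst (fst q)) * ?K [snd u] (snd (fst q))) *
        (\<Sum>v\<in>Spl as. ?K (fst v) (fst (snd q)) * ?K (snd v) (snd (snd q)))))"
  proof (intro sum.cong refl)
    fix q :: "(mat\<times>mat)\<times>(mat\<times>mat)"
    obtain P2 Q2 where q2: "snd q = (P2,Q2)" by (cases "snd q")
    show "cq P Q q * ((\<Sum>M\<in>Pk a. hh x y M * cop_basis M (fst q)) *
        (\<Sum>N\<in>Pk (sum_list as). ?K as N * cop_basis N (snd q))) =
      cq P Q q * ((\<Sum>u\<in>D a. ?K [fst u] (fst (fst q)) * ?K [snd u] (snd (fst q))) *
        (\<Sum>v\<in>Spl as. ?K (fst v) (fst (snd q)) * ?K (snd v) (snd (snd q))))"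
      unfolding single q2 Cons.IH by simp
  qed
  also have "\<dots> = (\<Sum>q\<in>?V4. \<Sum>w\<in>D a \<times> Spl as. cq P Q q *
     ((?K [fst (fst w)] (fst (fst q)) * ?K [snd (fst w)] (snd (fst q))) *
      (?K (fst (snd w)) (fst (snd q)) * ?K (snd (snd w)) (snd (snd q)))))"
    by (intro sum.cong refl) (subst sum_product_prod, subst sum_distrib_left, rule refl)
  also have "\<dots> = (\<Sum>w\<in>D a \<times> Spl as. \<Sum>q\<in>?V4. cq P Q q *
     ((?K [fst (fst w)] (fst (fst q)) * ?K [snd (fst w)] (snd (fst q))) *
      (?K (fst (snd w)) (fst (snd q)) * ?K (snd (snd w)) (snd (snd q)))))"
    by (rule sum.swap)
  also have "\<dots> = (\<Sum>w\<in>D a \<times> Spl as. ?K (fst (cc w)) P * ?K (snd (cc w)) Q)"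
  proof (intro sum.cong refl)
    fix w assume w: "w \<in> D a \<times> Spl as"
    then have b: "fst (fst w) \<le> W" "snd (fst w) \<le> W" by (auto simp: D_def W_def)
    have "sum_list (fst (snd w)) + sum_list (snd (snd w)) = sum_list as" using w Spl_sum by auto
    then have c: "sum_list (fst (snd w)) \<le> W" "sum_list (snd (snd w)) \<le> W" by (auto simp: W_def)
    show "(\<Sum>q\<in>?V4. cq P Q q *
     ((?K [fst (fst w)] (fst (fst q)) * ?K [snd (fst w)] (snd (fst q))) *
      (?K (fst (snd w)) (fst (snd q)) * ?K (snd (snd w)) (snd (snd q))))) = ?K (fst (cc w)) P * ?K (snd (cc w)) Q"
      unfolding cc_def fst_conv snd_conv by (rule prodK[OF b(1) c(1) b(2) c(2), symmetric])
  qed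
  also have "\<dots> = (\<Sum>z\<in>Spl (a#as). ?K (fst z) P * ?K (snd z) Q)"
    unfolding Spl_Cons by (rule sum.reindex[OF inj_cc, symmetric, unfolded comp_def])
  finally show ?case .
qed


lemma rw_pk_row: "rw (pk [bs]) = filter (\<lambda>a. a \<noteq> 0) bs"
proof -
  have c: "filter (\<lambda>j. \<exists>r'\<in>set [bs]. r' ! j \<noteq> 0) [0..<ncols [bs]] = filter (\<lambda>j. bs!j \<noteq> 0) [0..<length bs]"
    by (simp add: ncols_def)
  have f: "map (\<lambda>j. bs!j) (filter (\<lambda>j. bs!j \<noteq> 0) [0..<length bs]) = filter (\<lambda>a. a \<noteq> 0) bs"
    by (subst filter_nth_map[of _ bs]) simp
  have f': "map ((!) bs) (filter (\<lambda>j. 0 < bs ! j) [0..<length bs]) = filter ((<) 0) bs"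
    using f by simp
  show ?thesis
  proof (cases "\<exists>a\<in>set bs. a \<noteq> 0")
    case True
    then show ?thesis unfolding pk_def c by (simp add: rw_def f')
  next
    case False
    then have "filter (\<lambda>a. a \<noteq> 0) bs = []" by (simp add: filter_empty_conv)
    then show ?thesis using False unfolding pk_def by (auto simp: rw_def)
  qed
qed

lemma K_basis_pk_row: "K_basis x y (pk [bs]) = K_row x y bs"
  unfolding K_basis_rw rw_pk_row K_row_filter ..

lemma decomp_row: "decomp [r] = (\<lambda>z. ([fst z], [snd z])) ` Spl r"
proof (intro set_eqI iffI)
  fix w assume w: "w \<in> decomp [r]"
  obtain A B where ww: "w = (A,B)" by (cases w)
  have d: "length A = 1" "length B = 1" "\<forall>q\<in>set A. length q = length r" "\<forall>q\<in>set B. length q = length r"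
      "\<forall>j<length r. A!0!j + B!0!j = r!j"
    using w by (auto simp: ww decomp_def nrows_def ncols_def)
  obtain bs where A: "A = [bs]" using d(1) by (cases A) auto
  obtain cs where B: "B = [cs]" using d(2) by (cases B) auto
  have "(bs,cs) \<in> Spl r" using d by (auto simp: Spl_def A B)
  then show "w \<in> (\<lambda>z. ([fst z], [snd z])) ` Spl r" by (auto simp: ww A B image_iff intro!: bexI[of _ "(bs,cs)"])
next
  fix w assume "w \<in> (\<lambda>z. ([fst z], [snd z])) ` Spl r"
  then show "w \<in> decomp [r]" by (auto simp: Spl_def decomp_def nrows_def ncols_def)
qed

lemma pack1_cop: "packed_row R \<Longrightarrow>
  (\<Sum>z\<in>decomp R. K_basis x y (pk (fst z)) P * K_basis x y (pk (snd z)) Q)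
   = (\<Sum>z\<in>Spl (rw R). K_row x y (fst z) P * K_row x y (snd z) Q)"
proof -
  assume "packed_row R"
  then consider "R = []" | r where "R = [r]" by (auto simp: packed_row_def)
  then show ?thesis
  proof cases
    case 1
    then show ?thesis by (simp add: decomp_Nil Spl_Nil rw_def pk_def K_basis_def K_row_Nil)
  next
    case 2
    have inj: "inj_on (\<lambda>z. ([fst z], [snd z])) (Spl r)" by (auto simp: inj_on_def prod_eq_iff)
    show ?thesis unfolding 2 decomp_row sum.reindex[OF inj]
      by (simp add: rw_def K_basis_pk_row)
  qed
qed

definition SK :: "(mat \<Rightarrow> rat) \<Rightarrow> mat set" where
  "SK f = (\<Union>M\<in>supp f. Pk (sum_list (rw M)))"

lemma finite_SK: "f \<in> H_Pack1 \<Longrightarrow> finite (SK f)"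
  by (auto simp: SK_def H_Pack1_def finite_Pk)

lemma K_expand: "K x y f N = (\<Sum>M\<in>supp f. f M * K_row x y (rw M) N)"
  by (simp add: K_def lin_def K_basis_rw)

lemma supp_K: "supp (K x y f) \<subseteq> SK f"
proof
  fix N assume "N \<in> supp (K x y f)"
  then have "(\<Sum>M\<in>supp f. f M * K_row x y (rw M) N) \<noteq> 0" by (simp add: supp_def K_expand)
  then obtain M where "M \<in> supp f" "f M * K_row x y (rw M) N \<noteq> 0"
    by (rule sum.not_neutral_contains_not_neutral)
  then show "N \<in> SK f" using K_row_supp[of x y "rw M" N] by (auto simp: SK_def)
qed

lemma part1: "f \<in> H_Pack1 \<Longrightarrow> K x y f \<in> H_Pack"
  using supp_K[of x y f] finite_SK[of f] unfolding H_Pack_def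
  by (auto simp: SK_def Pk_def intro: finite_subset)

lemma part2: "K x y unit_el = unit_el"
proof
  fix N
  have "supp unit_el = {[]}" by (auto simp: supp_def unit_el_def)
  then show "K x y unit_el N = unit_el N"
    by (simp add: K_def lin_def K_basis_def unit_el_def)
qed

lemma part5: "f \<in> H_Pack1 \<Longrightarrow> counit (K x y f) = counit f"
proof -
  assume f: "f \<in> H_Pack1"
  have "f M * K_row x y (rw M) [] = (if M = [] then f M else 0)" if M: "M \<in> supp f" for M
  proof (cases "M = []")
    case True then show ?thesis by (simp add: rw_def K_row_Nil unit_el_def)
  next
    case False
    then obtain r where r: "M = [r]" "r \<noteq> []" "\<forall>a\<in>set r. 1 \<le> a"
      using f M by (auto simp: H_Pack1_def packed_row_def)
    then have "hd r \<in> set r" "1 \<le> hd r" by auto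
    then have "0 < sum_list r" using member_le_sum_list[of "hd r" r] by linarith
    then have "[] \<notin> Pk (sum_list (rw M))" using \<open>hd r \<in> set r\<close> \<open>1 \<le> hd r\<close>
      by (simp add: Pk_def r rw_def) (rule bexI[of _ "hd r"], auto intro: hd_in_set[OF r(2)])
    then show ?thesis using K_row_supp[of x y "rw M" "[]"] False by auto
  qed
  then have "counit (K x y f) = (\<Sum>M\<in>supp f. if M = [] then f M else 0)"
    by (simp add: counit_def K_expand)
  also have "\<dots> = f []" using f by (simp add: H_Pack1_def sum.delta' supp_def)
  finally show ?thesis by (simp add: counit_def)
qed


lemma rw_rconcat: "packed_row M1 \<Longrightarrow> packed_row M2 \<Longrightarrow> rw (rconcat M1 M2) = rw M1 @ rw M2"
  by (auto simp: packed_row_def rconcat_def rw_def)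

lemma Pk_SK: "M \<in> supp f \<Longrightarrow> Pk (sum_list (rw M)) \<subseteq> SK f"
  by (auto simp: SK_def)

lemma part3:
  assumes f: "f \<in> H_Pack1" and g: "g \<in> H_Pack1"
  shows "K x y (bilin rconcat f g) = bilin diag (K x y f) (K x y g)"
proof
  fix N
  let ?Z = "supp f \<times> supp g"
  let ?t = "\<lambda>z. rconcat (fst z) (snd z)"
  define S where "S = ?t ` ?Z"
  have fZ: "finite ?Z" using f g by (simp add: H_Pack1_def)
  then have fS: "finite S" by (simp add: S_def)
  have hsum: "bilin rconcat f g M = (\<Sum>z\<in>?Z. if ?t z = M then f (fst z) * g (snd z) else 0)" for M
    by (simp add: bilin_def sum_prod cong: if_cong)
  have suppS: "supp (bilin rconcat f g) \<subseteq> S"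
  proof
    fix M assume "M \<in> supp (bilin rconcat f g)"
    then have "(\<Sum>z\<in>?Z. if ?t z = M then f (fst z) * g (snd z) else 0) \<noteq> 0"
      by (simp add: supp_def hsum)
    then obtain z where "z \<in> ?Z" "(if ?t z = M then f (fst z) * g (snd z) else 0) \<noteq> 0"
      by (rule sum.not_neutral_contains_not_neutral)
    then show "M \<in> S" by (auto simp: S_def split: if_splits)
  qed
  have "K x y (bilin rconcat f g) N = (\<Sum>M\<in>S. bilin rconcat f g M * K_basis x y M N)"
    unfolding K_def by (rule lin_sum[OF fS suppS])
  also have "\<dots> = (\<Sum>M\<in>S. K_basis x y M N * (\<Sum>z\<in>?Z. if ?t z = M then f (fst z) * g (snd z) else 0))"
    by (simp add: hsum mult.commute)
  also have "\<dots> = (\<Sum>z\<in>?Z. K_basis x y (?t z) N * (f (fst z) * g (snd z)))"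
    by (rule sum_if_elim[OF fS]) (auto simp: S_def)
  finally have L: "K x y (bilin rconcat f g) N = \<dots>" .
  define T where "T = SK f \<union> SK g"
  have fT: "finite T" using f g by (simp add: T_def finite_SK)
  have "bilin diag (K x y f) (K x y g) N =
     (\<Sum>N1\<in>T. \<Sum>N2\<in>T. if diag N1 N2 = N then K x y f N1 * K x y g N2 else 0)"
    by (rule bilin_sum[OF fT fT]) (use supp_K[of x y f] supp_K[of x y g] in \<open>auto simp: T_def\<close>)
  also have "\<dots> = (\<Sum>N1\<in>T. \<Sum>N2\<in>T. \<Sum>z\<in>?Z.
      f (fst z) * g (snd z) * (if diag N1 N2 = N then K_row x y (rw (fst z)) N1 * K_row x y (rw (snd z)) N2 else 0))"
    by (intro sum.cong refl) (simp add: K_expand sum_product sum_prod mult_ac)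
  also have "\<dots> = (\<Sum>N1\<in>T. \<Sum>z\<in>?Z. \<Sum>N2\<in>T.
      f (fst z) * g (snd z) * (if diag N1 N2 = N then K_row x y (rw (fst z)) N1 * K_row x y (rw (snd z)) N2 else 0))"
    by (rule sum.cong[OF refl], rule sum.swap)
  also have "\<dots> = (\<Sum>z\<in>?Z. \<Sum>N1\<in>T. \<Sum>N2\<in>T.
      f (fst z) * g (snd z) * (if diag N1 N2 = N then K_row x y (rw (fst z)) N1 * K_row x y (rw (snd z)) N2 else 0))"
    by (rule sum.swap)
  also have "\<dots> = (\<Sum>z\<in>?Z. K_basis x y (?t z) N * (f (fst z) * g (snd z)))"
  proof (rule sum.cong[OF refl])
    fix z assume z: "z \<in> ?Z"
    then have pr: "packed_row (fst z)" "packed_row (snd z)" using f g by (auto simp: H_Pack1_def supp_def)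
    have "K_basis x y (?t z) N = K_row x y (rw (fst z) @ rw (snd z)) N"
      by (simp add: K_basis_rw rw_rconcat[OF pr])
    also have "\<dots> = (\<Sum>N1\<in>T. \<Sum>N2\<in>T. if diag N1 N2 = N then K_row x y (rw (fst z)) N1 * K_row x y (rw (snd z)) N2 else 0)"
      by (rule K_row_append_gen[OF fT fT]) (use z Pk_SK[of "fst z" f] Pk_SK[of "snd z" g] in \<open>auto simp: T_def\<close>)
    finally show "(\<Sum>N1\<in>T. \<Sum>N2\<in>T.
      f (fst z) * g (snd z) * (if diag N1 N2 = N then K_row x y (rw (fst z)) N1 * K_row x y (rw (snd z)) N2 else 0))
      = K_basis x y (?t z) N * (f (fst z) * g (snd z))"
      by (simp add: sum_distrib_left mult.commute)
  qed
  finally show "K x y (bilin rconcat f g) N = bilin diag (K x y f) (K x y g) N" using L by simp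
qed

lemma part4:
  assumes f: "f \<in> H_Pack1"
  shows "coprod (K x y f) = tensor_map (K_basis x y) (coprod f)"
proof
  fix w :: "mat \<times> mat"
  obtain P Q where w: "w = (P,Q)" by (cases w)
  have fs: "finite (supp f)" using f by (simp add: H_Pack1_def)
  have fSK: "finite (SK f)" using f by (rule finite_SK)
  have "coprod (K x y f) (P,Q) = (\<Sum>N\<in>SK f. K x y f N * cop_basis N (P,Q))"
    unfolding coprod_def by (rule lin_sum[OF fSK supp_K])
  also have "\<dots> = (\<Sum>N\<in>SK f. \<Sum>M\<in>supp f. f M * (K_row x y (rw M) N * cop_basis N (P,Q)))"
    by (simp add: K_expand sum_distrib_right mult.assoc)
  also have "\<dots> = (\<Sum>M\<in>supp f. \<Sum>N\<in>SK f. f M * (K_row x y (rw M) N * cop_basis N (P,Q)))"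
    by (rule sum.swap)
  also have "\<dots> = (\<Sum>M\<in>supp f. f M * (\<Sum>z\<in>Spl (rw M). K_row x y (fst z) P * K_row x y (snd z) Q))"
  proof (rule sum.cong[OF refl])
    fix M assume M: "M \<in> supp f"
    have "(\<Sum>N\<in>SK f. K_row x y (rw M) N * cop_basis N (P,Q))
        = (\<Sum>N\<in>Pk (sum_list (rw M)). K_row x y (rw M) N * cop_basis N (P,Q))"
      by (rule sum.mono_neutral_right[OF fSK Pk_SK[OF M]]) (simp add: K_row_zero)
    then show "(\<Sum>N\<in>SK f. f M * (K_row x y (rw M) N * cop_basis N (P,Q)))
       = f M * (\<Sum>z\<in>Spl (rw M). K_row x y (fst z) P * K_row x y (snd z) Q)"
      by (simp add: sum_distrib_left[symmetric] core_cop)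
  qed
  finally have L: "coprod (K x y f) (P,Q) = \<dots>" .
  let ?pp = "\<lambda>z::mat\<times>mat. (pk (fst z), pk (snd z))"
  define U where "U = (\<Union>M\<in>supp f. ?pp ` decomp M)"
  have fU: "finite U" using fs by (simp add: U_def finite_decomp)
  have cf: "coprod f v = (\<Sum>M\<in>supp f. f M * cop_basis M v)" for v
    by (simp add: coprod_def lin_def)
  have cop0: "cop_basis M v = 0" if "v \<notin> ?pp ` decomp M" for M v
    using that by (force simp: cop_sum intro!: sum.neutral)
  have suppU: "supp (coprod f) \<subseteq> U"
  proof
    fix v assume "v \<in> supp (coprod f)"
    then have "(\<Sum>M\<in>supp f. f M * cop_basis M v) \<noteq> 0" by (simp add: supp_def cf)
    then obtain M where "M \<in> supp f" "f M * cop_basis M v \<noteq> 0"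
      by (rule sum.not_neutral_contains_not_neutral)
    then show "v \<in> U" using cop0[of v M] by (auto simp: U_def)
  qed
  have "tensor_map (K_basis x y) (coprod f) (P,Q)
      = (\<Sum>v\<in>U. coprod f v * (K_basis x y (fst v) P * K_basis x y (snd v) Q))"
    unfolding tensor_map_def by (subst lin_sum[OF fU suppU]) (simp add: split_def)
  also have "\<dots> = (\<Sum>v\<in>U. \<Sum>M\<in>supp f. f M * ((K_basis x y (fst v) P * K_basis x y (snd v) Q) * cop_basis M v))"
    by (rule sum.cong[OF refl], simp only: cf sum_distrib_right, rule sum.cong[OF refl], simp add: mult_ac)
  also have "\<dots> = (\<Sum>M\<in>supp f. \<Sum>v\<in>U. f M * ((K_basis x y (fst v) P * K_basis x y (snd v) Q) * cop_basis M v))"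
    by (rule sum.swap)
  also have "\<dots> = (\<Sum>M\<in>supp f. f M * (\<Sum>z\<in>Spl (rw M). K_row x y (fst z) P * K_row x y (snd z) Q))"
  proof (rule sum.cong[OF refl])
    fix M assume M: "M \<in> supp f"
    have pr: "packed_row M" using f M by (auto simp: H_Pack1_def)
    have "(\<Sum>v\<in>U. (K_basis x y (fst v) P * K_basis x y (snd v) Q) * cop_basis M v)
       = (\<Sum>v\<in>U. (K_basis x y (fst v) P * K_basis x y (snd v) Q) *
            (\<Sum>z\<in>decomp M. if ?pp z = v then 1 else 0))"
      by (simp add: cop_sum)
    also have "\<dots> = (\<Sum>z\<in>decomp M. (K_basis x y (fst (?pp z)) P * K_basis x y (snd (?pp z)) Q) * 1)"
      by (rule sum_if_elim[OF fU]) (use M in \<open>auto simp: U_def\<close>)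
    also have "\<dots> = (\<Sum>z\<in>Spl (rw M). K_row x y (fst z) P * K_row x y (snd z) Q)"
      using pack1_cop[OF pr, of x y P Q] by simp
    finally show "(\<Sum>v\<in>U. f M * ((K_basis x y (fst v) P * K_basis x y (snd v) Q) * cop_basis M v))
      = f M * (\<Sum>z\<in>Spl (rw M). K_row x y (fst z) P * K_row x y (snd z) Q)"
      by (simp add: sum_distrib_left[symmetric])
  qed
  finally show "coprod (K x y f) w = tensor_map (K_basis x y) (coprod f) w" using L w by simp
qed

theorem mainTheorem5:
  fixes x y :: rat
  shows "(\<forall>f\<in>H_Pack1. K x y f \<in> H_Pack)
    \<and> K x y unit_el = unit_el
    \<and> (\<forall>f\<in>H_Pack1. \<forall>g\<in>H_Pack1. K x y (bilin rconcat f g) = bilin diag (K x y f) (K x y g))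
    \<and> (\<forall>f\<in>H_Pack1. coprod (K x y f) = tensor_map (K_basis x y) (coprod f))
    \<and> (\<forall>f\<in>H_Pack1. counit (K x y f) = counit f)"
  using part1 part2 part3 part4 part5 by blast

end
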